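(* Let $n\ge 1$, $e\ge 1$ and $r\ge 2$ be integers, let $V=\mathbb{C}^{n+1}$, and let $\alpha_r: S_r(S_{2e}(V))\to S_2(S_{re}(V))$ be the $GL(V)$-equivariant map defined below. Then $\alpha_r$ is surjective.
   Context: $S_k(-)$ denotes the $k$-th symmetric power. Identify $S_m(V)$ with homogeneous forms of degree $m$ in variables $\underline{x}=(x_0,\dots,x_n)$, and identify $S_2(S_m(V))$ with the space of polynomials in two sets of variables $\underline{x},\underline{y}=(y_0,\dots,y_n)$ that are bihomogeneous of bidegree $(m,m)$ and symmetric under interchanging $\underline{x}$ and $\underline{y}$. The map $\alpha_r$ is defined on products $F_1\cdots F_r\in S_r(S_{2e}(V))$ of degree-$2e$ forms by: for each $i$ let $F_i(\underline{x},\underline{y})=\bigl(\sum_{\ell=0}^n y_\ell\,\partial/\partial x_\ell\bigr)^e F_i(\underline{x})$ (a form of bidegree $(e,e)$, symmetric in $\underline{x},\underline{y}$), and set $\alpha_r(F_1\cdots F_r)=\prod_{i=1}^r F_i(\underline{x},\underline{y})$; extend linearly. Equivalently, $\alpha_r$ is the composite $S_r(S_{2e})\to S_r(S_e\otimes S_e)\to S_r(S_e)\otimes S_r(S_e)\to S_{re}\otimes S_{re}\to S_2(S_{re})$ of the map induced by the coproduct, the Cauchy-decomposition projection, multiplication, and symmetrization. *)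

theory Defs
  imports "HOL-Analysis.Analysis"
begin

text \<open>Points of V = C^(n+1) are represented as functions nat => complex; only the
coordinates 0..n are used.  Forms and bihomogeneous polynomials are represented by
their polynomial functions (faithful over the infinite field C).\<close>

definition exps :: "nat \<Rightarrow> nat \<Rightarrow> (nat \<Rightarrow> nat) set" where
  "exps n m = {a. (\<forall>l>n. a l = 0) \<and> (\<Sum>l\<le>n. a l) = m}"

definition xmono :: "nat \<Rightarrow> (nat \<Rightarrow> nat) \<Rightarrow> (nat \<Rightarrow> complex) \<Rightarrow> complex" where
  "xmono n a x = (\<Prod>l\<le>n. x l ^ a l)"

definition is_form :: "nat \<Rightarrow> nat \<Rightarrow> ((nat \<Rightarrow> complex) \<Rightarrow> complex) \<Rightarrow> bool" where
  "is_form n m F \<longleftrightarrow> (\<exists>c. F = (\<lambda>x. \<Sum>a\<in>exps n m. c a * xmono n a x))"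

text \<open>S_2(S_m(V)): bihomogeneous of bidegree (m,m), symmetric in x and y.\<close>
definition is_sym_biform :: "nat \<Rightarrow> nat \<Rightarrow> ((nat \<Rightarrow> complex) \<Rightarrow> (nat \<Rightarrow> complex) \<Rightarrow> complex) \<Rightarrow> bool" where
  "is_sym_biform n m G \<longleftrightarrow>
     (\<exists>c. G = (\<lambda>x y. \<Sum>a\<in>exps n m. \<Sum>b\<in>exps n m. c a b * xmono n a x * xmono n b y))
     \<and> (\<forall>x y. G x y = G y x)"

text \<open>(\<Sum>_l y_l d/dx_l)^e F (x), computed as the e-th derivative of t |-> F(x + t y) at t = 0.\<close>
definition polar :: "nat \<Rightarrow> ((nat \<Rightarrow> complex) \<Rightarrow> complex) \<Rightarrow> (nat \<Rightarrow> complex) \<Rightarrow> (nat \<Rightarrow> complex) \<Rightarrow> complex" where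
  "polar e F x y = (deriv ^^ e) (\<lambda>t. F (\<lambda>l. x l + t * y l)) 0"

text \<open>alpha_r on a product F_1 ... F_r.\<close>
definition alpha_prod :: "nat \<Rightarrow> nat \<Rightarrow> (nat \<Rightarrow> (nat \<Rightarrow> complex) \<Rightarrow> complex) \<Rightarrow> (nat \<Rightarrow> complex) \<Rightarrow> (nat \<Rightarrow> complex) \<Rightarrow> complex" where
  "alpha_prod e r Fs x y = (\<Prod>i<r. polar e (Fs i) x y)"

end

theory Submission
  imports Defs "HOL-Computational_Algebra.Polynomial"
begin

lemma sum_lessThan_add_split:
  fixes a b :: nat
  shows "(\<Sum>j<a+b. f j) = (\<Sum>j<a. f j) + (\<Sum>j<b. f (a+j))"
  by (induction b) (simp_all add: add.assoc)

lemma prod_lessThan_add_split: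
  fixes a b :: nat
  shows "(\<Prod>j<a+b. f j) = (\<Prod>j<a. f j) * (\<Prod>j<b. f (a+j))"
  by (induction b) (simp_all add: mult.assoc)

lemma finite_exps: "finite (exps n m)"
proof -
  have "exps n m \<subseteq> (\<lambda>f l. if l \<le> n then f l else 0) ` ({..n} \<rightarrow>\<^sub>E {..m})"
  proof
    fix a assume a: "a \<in> exps n m"
    hence z: "\<forall>l>n. a l = 0" and s: "(\<Sum>l\<le>n. a l) = m" by (auto simp: exps_def)
    have le: "a l \<le> m" if "l \<le> n" for l
    proof -
      have "a l \<le> (\<Sum>l\<le>n. a l)" using that by (intro member_le_sum) auto
      thus ?thesis using s by simp
    qed
    let ?g = "restrict a {..n}"
    have "?g \<in> {..n} \<rightarrow>\<^sub>E {..m}" using le by auto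
    moreover have "a = (\<lambda>l. if l \<le> n then ?g l else 0)"
      using z by (auto simp: fun_eq_iff)
    ultimately show "a \<in> (\<lambda>f l. if l \<le> n then f l else 0) ` ({..n} \<rightarrow>\<^sub>E {..m})" by blast
  qed
  thus ?thesis by (rule finite_subset) (intro finite_imageI finite_PiE; simp)
qed

lemma xmono_add: "xmono n (\<lambda>l. a l + b l) x = xmono n a x * xmono n b x"
  by (simp add: xmono_def power_add prod.distrib)

lemma exps_add: "a \<in> exps n p \<Longrightarrow> b \<in> exps n q \<Longrightarrow> (\<lambda>l. a l + b l) \<in> exps n (p+q)"
  by (auto simp: exps_def sum.distrib)

lemma is_form_gen:
  assumes "finite I" "\<forall>i\<in>I. a i \<in> exps n m"
  shows "is_form n m (\<lambda>x. \<Sum>i\<in>I. c i * xmono n (a i) x)"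
proof -
  define d where "d b = (\<Sum>i\<in>{i\<in>I. a i = b}. c i)" for b
  have "(\<lambda>x. \<Sum>i\<in>I. c i * xmono n (a i) x) = (\<lambda>x. \<Sum>b\<in>exps n m. d b * xmono n b x)"
  proof
    fix x
    have "(\<Sum>b\<in>exps n m. d b * xmono n b x) = (\<Sum>b\<in>exps n m. \<Sum>i\<in>{i\<in>I. a i = b}. c i * xmono n (a i) x)"
      unfolding d_def sum_distrib_right by (intro sum.cong refl) auto
    also have "\<dots> = (\<Sum>i\<in>I. c i * xmono n (a i) x)"
      using assms finite_exps by (intro sum.group) auto
    finally show "(\<Sum>i\<in>I. c i * xmono n (a i) x) = (\<Sum>b\<in>exps n m. d b * xmono n b x)" by simp
  qed
  thus ?thesis unfolding is_form_def by blast
qed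

lemma is_form_mult:
  assumes "is_form n p F" "is_form n q G"
  shows "is_form n (p+q) (\<lambda>x. F x * G x)"
proof -
  obtain c where c: "F = (\<lambda>x. \<Sum>a\<in>exps n p. c a * xmono n a x)" using assms(1) by (auto simp: is_form_def)
  obtain d where d: "G = (\<lambda>x. \<Sum>a\<in>exps n q. d a * xmono n a x)" using assms(2) by (auto simp: is_form_def)
  have "(\<lambda>x. F x * G x) = (\<lambda>x. \<Sum>ab\<in>exps n p \<times> exps n q. (c (fst ab) * d (snd ab)) * xmono n (\<lambda>l. fst ab l + snd ab l) x)"
  proof
    fix x
    have "F x * G x = (\<Sum>a\<in>exps n p. \<Sum>b\<in>exps n q. (c a * xmono n a x) * (d b * xmono n b x))"
      unfolding c d by (simp add: sum_product)
    also have "\<dots> = (\<Sum>a\<in>exps n p. \<Sum>b\<in>exps n q. (c a * d b) * xmono n (\<lambda>l. a l + b l) x)"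
      by (simp only: xmono_add mult_ac)
    also have "\<dots> = (\<Sum>ab\<in>exps n p \<times> exps n q. (c (fst ab) * d (snd ab)) * xmono n (\<lambda>l. fst ab l + snd ab l) x)"
      by (subst sum.cartesian_product) (simp add: case_prod_beta)
    finally show "F x * G x = (\<Sum>ab\<in>exps n p \<times> exps n q. (c (fst ab) * d (snd ab)) * xmono n (\<lambda>l. fst ab l + snd ab l) x)" .
  qed
  moreover have "is_form n (p+q) (\<lambda>x. \<Sum>ab\<in>exps n p \<times> exps n q. (c (fst ab) * d (snd ab)) * xmono n (\<lambda>l. fst ab l + snd ab l) x)"
    by (intro is_form_gen) (auto simp: finite_exps exps_add)
  ultimately show ?thesis by simp
qed

lemma is_form_add:
  assumes "is_form n m F" "is_form n m G"
  shows "is_form n m (\<lambda>x. F x + G x)"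
proof -
  obtain c where c: "F = (\<lambda>x. \<Sum>a\<in>exps n m. c a * xmono n a x)" using assms(1) by (auto simp: is_form_def)
  obtain d where d: "G = (\<lambda>x. \<Sum>a\<in>exps n m. d a * xmono n a x)" using assms(2) by (auto simp: is_form_def)
  have "(\<lambda>x. F x + G x) = (\<lambda>x. \<Sum>a\<in>exps n m. (c a + d a) * xmono n a x)"
    unfolding c d by (auto simp: sum.distrib algebra_simps)
  thus ?thesis unfolding is_form_def by (intro exI[of _ "\<lambda>a. c a + d a"])
qed

lemma is_form_smult:
  assumes "is_form n m F"
  shows "is_form n m (\<lambda>x. a * F x)"
proof -
  obtain c where c: "F = (\<lambda>x. \<Sum>b\<in>exps n m. c b * xmono n b x)" using assms(1) by (auto simp: is_form_def)
  have "(\<lambda>x. a * F x) = (\<lambda>x. \<Sum>b\<in>exps n m. (a * c b) * xmono n b x)"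
    unfolding c by (auto simp: sum_distrib_left mult_ac)
  thus ?thesis unfolding is_form_def by (intro exI[of _ "\<lambda>b. a * c b"])
qed

lemma is_form_zero: "is_form n m (\<lambda>x. 0)"
  unfolding is_form_def by (rule exI[of _ "\<lambda>_. 0"]) simp

lemma is_form_sum:
  assumes "finite S" "\<And>s. s \<in> S \<Longrightarrow> is_form n m (f s)"
  shows "is_form n m (\<lambda>x. \<Sum>s\<in>S. f s x)"
  using assms
proof (induction S rule: finite_induct)
  case empty thus ?case by (simp add: is_form_zero)
next
  case (insert s S)
  thus ?case by (simp add: is_form_add)
qed

lemma exps_zero: "exps n 0 = {\<lambda>l. 0}"
proof -
  have "a = (\<lambda>l. 0)" if "a \<in> exps n 0" for a
  proof
    fix l show "a l = 0" using that by (cases "l \<le> n") (auto simp: exps_def)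
  qed
  thus ?thesis by (auto simp: exps_def)
qed

lemma is_form_const: "is_form n 0 (\<lambda>x. a)"
  unfolding is_form_def exps_zero by (rule exI[of _ "\<lambda>_. a"]) (simp add: xmono_def)

lemma is_form_pow:
  assumes "is_form n p F"
  shows "is_form n (k*p) (\<lambda>x. F x ^ k)"
proof (induction k)
  case 0 thus ?case using is_form_const[of n 1] by simp
next
  case (Suc k)
  from is_form_mult[OF assms Suc] show ?case by (simp add: add.commute)
qed

definition lin :: "nat \<Rightarrow> (nat \<Rightarrow> complex) \<Rightarrow> (nat \<Rightarrow> complex) \<Rightarrow> complex" where
  "lin n w x = (\<Sum>l\<le>n. w l * x l)"

lemma is_form_lin: "is_form n 1 (lin n w)"
proof -
  define a where "a (l::nat) = (\<lambda>i::nat. if i = l then 1 else (0::nat))" for l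
  have "a l \<in> exps n 1" if "l \<le> n" for l
    using that by (auto simp: exps_def a_def)
  moreover have "xmono n (a l) x = x l" if "l \<le> n" for l x
  proof -
    have "xmono n (a l) x = (\<Prod>i\<le>n. if i = l then x i else 1)"
      unfolding xmono_def a_def by (intro prod.cong) auto
    also have "\<dots> = x l" using that by (subst prod.delta) auto
    finally show ?thesis .
  qed
  ultimately have eq: "lin n w = (\<lambda>x. \<Sum>l\<in>{..n}. w l * xmono n (a l) x)"
    by (auto simp: lin_def fun_eq_iff)
  have "is_form n 1 (\<lambda>x. \<Sum>l\<in>{..n}. w l * xmono n (a l) x)" using \<open>\<And>l. l \<le> n \<Longrightarrow> a l \<in> exps n 1\<close>
    by (intro is_form_gen) auto
  thus ?thesis using eq by simp
qed

lemma lin_affine: "lin n w (\<lambda>l. x l + t * y l) = lin n w x + t * lin n w y"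
  by (simp add: lin_def algebra_simps sum.distrib sum_distrib_left)

section \<open>Polarization via polynomials\<close>

lemma deriv_funpow_poly: "(deriv ^^ k) (poly P) = poly ((pderiv ^^ k) P)"
proof (induction k)
  case 0 thus ?case by simp
next
  case (Suc k)
  have "(deriv ^^ Suc k) (poly P) = deriv ((deriv ^^ k) (poly P))" by simp
  also have "\<dots> = deriv (poly ((pderiv ^^ k) P))" by (simp add: Suc)
  also have "\<dots> = poly (pderiv ((pderiv ^^ k) P))"
    by (rule ext, rule DERIV_imp_deriv, rule poly_DERIV)
  finally show ?case by simp
qed

lemma poly_higher_pderiv_0: "poly ((pderiv ^^ k) P) 0 = fact k * coeff P k"
  by (simp add: poly_0_coeff_0 coeff_higher_pderiv pochhammer_fact)

lemma polar_poly:
  assumes "\<And>t. F (\<lambda>l. x l + t * y l) = poly P t"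
  shows "polar e F x y = fact e * coeff P e"
proof -
  have "(\<lambda>t. F (\<lambda>l. x l + t * y l)) = poly P" using assms by (simp add: fun_eq_iff)
  thus ?thesis unfolding polar_def by (simp add: deriv_funpow_poly poly_higher_pderiv_0)
qed

definition has_pr :: "((nat \<Rightarrow> complex) \<Rightarrow> complex) \<Rightarrow> bool" where
  "has_pr F \<longleftrightarrow> (\<forall>x y. \<exists>P. \<forall>t. F (\<lambda>l. x l + t * y l) = poly P t)"

lemma has_pr_form: "is_form n m F \<Longrightarrow> has_pr F"
proof -
  assume "is_form n m F"
  then obtain c where c: "F = (\<lambda>x. \<Sum>a\<in>exps n m. c a * xmono n a x)" by (auto simp: is_form_def)
  show "has_pr F" unfolding has_pr_def
  proof (intro allI)
    fix x y :: "nat \<Rightarrow> complex"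
    let ?P = "\<Sum>a\<in>exps n m. smult (c a) (\<Prod>l\<le>n. [:x l, y l:] ^ a l)"
    have "\<forall>t. F (\<lambda>l. x l + t * y l) = poly ?P t"
      by (simp add: c poly_sum poly_prod xmono_def algebra_simps)
    thus "\<exists>P. \<forall>t. F (\<lambda>l. x l + t * y l) = poly P t" by blast
  qed
qed

lemma polar_lincomb:
  assumes "has_pr F" "has_pr G"
  shows "polar e (\<lambda>z. a * F z + b * G z) x y = a * polar e F x y + b * polar e G x y"
proof -
  obtain P where P: "\<And>t. F (\<lambda>l. x l + t * y l) = poly P t" using assms(1) unfolding has_pr_def by blast
  obtain Q where Q: "\<And>t. G (\<lambda>l. x l + t * y l) = poly Q t" using assms(2) unfolding has_pr_def by blast
  have "polar e (\<lambda>z. a * F z + b * G z) x y = fact e * coeff (smult a P + smult b Q) e"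
    by (rule polar_poly) (simp add: P Q)
  thus ?thesis by (simp add: polar_poly[OF P] polar_poly[OF Q] algebra_simps)
qed

lemma has_pr_lincomb: "has_pr F \<Longrightarrow> has_pr G \<Longrightarrow> has_pr (\<lambda>z. a * F z + b * G z)"
  unfolding has_pr_def
proof (intro allI)
  fix x y
  assume F: "\<forall>x y. \<exists>P. \<forall>t. F (\<lambda>l. x l + t * y l) = poly P t"
     and G: "\<forall>x y. \<exists>P. \<forall>t. G (\<lambda>l. x l + t * y l) = poly P t"
  obtain P where P: "\<And>t. F (\<lambda>l. x l + t * y l) = poly P t" using F by blast
  obtain Q where Q: "\<And>t. G (\<lambda>l. x l + t * y l) = poly Q t" using G by blast
  have "\<forall>t. a * F (\<lambda>l. x l + t * y l) + b * G (\<lambda>l. x l + t * y l) = poly (smult a P + smult b Q) t"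
    by (simp add: P Q)
  thus "\<exists>P. \<forall>t. a * F (\<lambda>l. x l + t * y l) + b * G (\<lambda>l. x l + t * y l) = poly P t" by blast
qed

lemma has_pr_zero: "has_pr (\<lambda>z. 0)"
  unfolding has_pr_def by (metis poly_0)

lemma polar_zero: "polar e (\<lambda>z. 0) x y = 0"
  using polar_poly[of "\<lambda>z. 0" x y 0] by simp

lemma polar_sum:
  assumes "finite S" "\<And>s. s \<in> S \<Longrightarrow> has_pr (f s)"
  shows "polar e (\<lambda>z. \<Sum>s\<in>S. c s * f s z) x y = (\<Sum>s\<in>S. c s * polar e (f s) x y)"
    and "has_pr (\<lambda>z. \<Sum>s\<in>S. c s * f s z)"
  using assms
proof (induction S rule: finite_induct)
  case empty
  { case 1 show ?case by (simp add: polar_zero) }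
  { case 2 show ?case by (simp add: has_pr_zero) }
next
  case (insert s S)
  { case 1
    have "polar e (\<lambda>z. \<Sum>s\<in>insert s S. c s * f s z) x y
        = polar e (\<lambda>z. c s * f s z + 1 * (\<Sum>s\<in>S. c s * f s z)) x y"
      using insert by simp
    also have "\<dots> = c s * polar e (f s) x y + 1 * polar e (\<lambda>z. \<Sum>s\<in>S. c s * f s z) x y"
      using insert 1 by (intro polar_lincomb) auto
    finally show ?case using insert 1 by simp }
  { case 2
    have "has_pr (\<lambda>z. c s * f s z + 1 * (\<Sum>s\<in>S. c s * f s z))"
      using insert 2 by (intro has_pr_lincomb) auto
    thus ?case using insert by simp }
qed

section \<open>The span of the image\<close>

definition inV :: "nat \<Rightarrow> nat \<Rightarrow> nat \<Rightarrow> ((nat \<Rightarrow> complex) \<Rightarrow> (nat \<Rightarrow> complex) \<Rightarrow> complex) \<Rightarrow> bool" where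
  "inV n e r G \<longleftrightarrow> (\<exists>(k::nat) (c::nat \<Rightarrow> complex) (Fs::nat \<Rightarrow> nat \<Rightarrow> (nat \<Rightarrow> complex) \<Rightarrow> complex).
              (\<forall>j<k. \<forall>i<r. is_form n (2 * e) (Fs j i)) \<and>
              G = (\<lambda>x y. \<Sum>j<k. c j * alpha_prod e r (Fs j) x y))"

lemma inV_E:
  assumes "inV n e r F"
  obtains k :: nat and c :: "nat \<Rightarrow> complex" and Fs :: "nat \<Rightarrow> nat \<Rightarrow> (nat \<Rightarrow> complex) \<Rightarrow> complex"
  where "\<forall>j<k. \<forall>i<r. is_form n (2 * e) (Fs j i)" "F = (\<lambda>x y. \<Sum>j<k. c j * alpha_prod e r (Fs j) x y)"
  using assms unfolding inV_def by (elim exE conjE) (rule that)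

lemma inV_I:
  fixes k :: nat and c :: "nat \<Rightarrow> complex" and Fs :: "nat \<Rightarrow> nat \<Rightarrow> (nat \<Rightarrow> complex) \<Rightarrow> complex"
  assumes "\<forall>j<k. \<forall>i<r. is_form n (2 * e) (Fs j i)" "F = (\<lambda>x y. \<Sum>j<k. c j * alpha_prod e r (Fs j) x y)"
  shows "inV n e r F"
  unfolding inV_def by (rule exI[of _ k], rule exI[of _ c], rule exI[of _ Fs]) (use assms in simp)

lemma inV_zero: "inV n e r (\<lambda>x y. 0)"
  by (rule inV_I[where k=0]) auto

lemma inV_add:
  assumes "inV n e r F" "inV n e r G"
  shows "inV n e r (\<lambda>x y. F x y + G x y)"
proof -
  obtain k1 :: nat and c1 :: "nat \<Rightarrow> complex" and Fs1 :: "nat \<Rightarrow> nat \<Rightarrow> (nat \<Rightarrow> complex) \<Rightarrow> complex" where 1: "\<forall>j<k1. \<forall>i<r. is_form n (2 * e) (Fs1 j i)"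
    "F = (\<lambda>x y. \<Sum>j<k1. c1 j * alpha_prod e r (Fs1 j) x y)" using assms(1) by (rule inV_E)
  obtain k2 :: nat and c2 :: "nat \<Rightarrow> complex" and Fs2 :: "nat \<Rightarrow> nat \<Rightarrow> (nat \<Rightarrow> complex) \<Rightarrow> complex" where 2: "\<forall>j<k2. \<forall>i<r. is_form n (2 * e) (Fs2 j i)"
    "G = (\<lambda>x y. \<Sum>j<k2. c2 j * alpha_prod e r (Fs2 j) x y)" using assms(2) by (rule inV_E)
  define c where "c (j::nat) = (if j < k1 then c1 j else c2 (j - k1))" for j
  define Fs where "Fs (j::nat) = (if j < k1 then Fs1 j else Fs2 (j - k1))" for j
  have "\<forall>j<k1+k2. \<forall>i<r. is_form n (2 * e) (Fs j i)"
    using 1(1) 2(1) by (auto simp: Fs_def)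
  moreover have "(\<lambda>x y. F x y + G x y) = (\<lambda>x y. \<Sum>j<k1+k2. c j * alpha_prod e r (Fs j) x y)"
  proof (intro ext)
    fix x y
    have "(\<Sum>j<k1+k2. c j * alpha_prod e r (Fs j) x y) = (\<Sum>j<k1. c j * alpha_prod e r (Fs j) x y) + (\<Sum>j<k2. c (k1+j) * alpha_prod e r (Fs (k1+j)) x y)"
      by (rule sum_lessThan_add_split)
    also have "(\<Sum>j<k1. c j * alpha_prod e r (Fs j) x y) = F x y"
      unfolding 1(2) by (intro sum.cong refl) (simp add: c_def Fs_def)
    also have "(\<Sum>j<k2. c (k1+j) * alpha_prod e r (Fs (k1+j)) x y) = G x y"
      unfolding 2(2) by (intro sum.cong refl) (simp add: c_def Fs_def)
    finally show "F x y + G x y = (\<Sum>j<k1+k2. c j * alpha_prod e r (Fs j) x y)" by simp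
  qed
  ultimately show ?thesis by (rule inV_I)
qed

lemma inV_smult:
  assumes "inV n e r F"
  shows "inV n e r (\<lambda>x y. a * F x y)"
proof -
  obtain k :: nat and c :: "nat \<Rightarrow> complex" and Fs :: "nat \<Rightarrow> nat \<Rightarrow> (nat \<Rightarrow> complex) \<Rightarrow> complex" where 1: "\<forall>j<k. \<forall>i<r. is_form n (2 * e) (Fs j i)"
    "F = (\<lambda>x y. \<Sum>j<k. c j * alpha_prod e r (Fs j) x y)" using assms(1) by (rule inV_E)
  have "(\<lambda>x y. a * F x y) = (\<lambda>x y. \<Sum>j<k. (a * c j) * alpha_prod e r (Fs j) x y)"
    by (simp add: 1(2) sum_distrib_left mult_ac)
  with 1(1) show ?thesis by (intro inV_I)
qed

lemma inV_diff:
  assumes "inV n e r F" "inV n e r G"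
  shows "inV n e r (\<lambda>x y. F x y - G x y)"
  using inV_add[OF assms(1) inV_smult[OF assms(2), of "-1"]] by simp

lemma inV_sum:
  assumes "finite S" "\<And>s. s \<in> S \<Longrightarrow> inV n e r (f s)"
  shows "inV n e r (\<lambda>x y. \<Sum>s\<in>S. f s x y)"
  using assms
proof (induction S rule: finite_induct)
  case empty thus ?case by (simp add: inV_zero)
next
  case (insert s S)
  thus ?case using inV_add[of n e r "f s" "\<lambda>x y. \<Sum>s\<in>S. f s x y"] by simp
qed

lemma inV_cong: "inV n e r F \<Longrightarrow> (\<And>x y. F x y = G x y) \<Longrightarrow> inV n e r G"
proof -
  assume "inV n e r F" "\<And>x y. F x y = G x y"
  moreover have "F = G" using \<open>\<And>x y. F x y = G x y\<close> by (simp add: fun_eq_iff)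
  ultimately show ?thesis by simp
qed

lemma inV_single:
  assumes "\<forall>i<r. is_form n (2 * e) (Fs i)"
  shows "inV n e r (alpha_prod e r Fs)"
  by (rule inV_I[where k=1 and c="\<lambda>_. 1" and Fs="\<lambda>_. Fs"]) (use assms in \<open>auto simp: fun_eq_iff\<close>)

lemma alpha_prod_concat:
  "alpha_prod e (r1+r2) (\<lambda>i. if i < r1 then X i else Y (i - r1)) x y = alpha_prod e r1 X x y * alpha_prod e r2 Y x y"
  unfolding alpha_prod_def by (simp add: prod_lessThan_add_split)

lemma inV_mult:
  assumes "inV n e r1 F" "inV n e r2 G"
  shows "inV n e (r1+r2) (\<lambda>x y. F x y * G x y)"
proof -
  obtain k1 :: nat and c1 :: "nat \<Rightarrow> complex" and Fs1 :: "nat \<Rightarrow> nat \<Rightarrow> (nat \<Rightarrow> complex) \<Rightarrow> complex" where 1: "\<forall>j<k1. \<forall>i<r1. is_form n (2 * e) (Fs1 j i)"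
    "F = (\<lambda>x y. \<Sum>j<k1. c1 j * alpha_prod e r1 (Fs1 j) x y)" using assms(1) by (rule inV_E)
  obtain k2 :: nat and c2 :: "nat \<Rightarrow> complex" and Fs2 :: "nat \<Rightarrow> nat \<Rightarrow> (nat \<Rightarrow> complex) \<Rightarrow> complex" where 2: "\<forall>j<k2. \<forall>i<r2. is_form n (2 * e) (Fs2 j i)"
    "G = (\<lambda>x y. \<Sum>j<k2. c2 j * alpha_prod e r2 (Fs2 j) x y)" using assms(2) by (rule inV_E)
  have eq: "F x y * G x y = (\<Sum>j1<k1. \<Sum>j2<k2. (c1 j1 * c2 j2) * alpha_prod e (r1+r2)
       (\<lambda>i. if i < r1 then Fs1 j1 i else Fs2 j2 (i - r1)) x y)" for x y
  proof -
    have "F x y * G x y = (\<Sum>j1<k1. \<Sum>j2<k2. (c1 j1 * alpha_prod e r1 (Fs1 j1) x y) * (c2 j2 * alpha_prod e r2 (Fs2 j2) x y))"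
      by (simp add: 1(2) 2(2) sum_product)
    thus ?thesis by (simp only: alpha_prod_concat mult_ac)
  qed
  have "inV n e (r1+r2) (\<lambda>x y. \<Sum>j1<k1. \<Sum>j2<k2. (c1 j1 * c2 j2) * alpha_prod e (r1+r2)
       (\<lambda>i. if i < r1 then Fs1 j1 i else Fs2 j2 (i - r1)) x y)"
    using 1(1) 2(1)
    by (intro inV_sum inV_smult inV_single) auto
  thus ?thesis by (rule inV_cong) (simp add: eq)
qed

section \<open>Linear substitutions\<close>

definition sub2 :: "nat \<Rightarrow> (nat \<Rightarrow> complex) \<Rightarrow> (nat \<Rightarrow> complex) \<Rightarrow> (nat \<Rightarrow> complex) \<Rightarrow> (nat \<Rightarrow> complex)" where
  "sub2 n v w x = (\<lambda>l. if l = 0 then lin n v x else if l = 1 then lin n w x else 0)"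

lemma sub2_affine: "sub2 n v w (\<lambda>l. x l + t * y l) = (\<lambda>l. sub2 n v w x l + t * sub2 n v w y l)"
  by (auto simp: sub2_def lin_affine fun_eq_iff)

lemma polar_sub2: "polar e (\<lambda>z. F (sub2 n v w z)) x y = polar e F (sub2 n v w x) (sub2 n v w y)"
  unfolding polar_def by (simp add: sub2_affine)

lemma exps1_sum: "a \<in> exps 1 m \<Longrightarrow> a 0 + a 1 = m"
  by (simp add: exps_def atMost_Suc)

lemma xmono1: "xmono 1 a x = x 0 ^ a 0 * x 1 ^ a 1"
  by (simp add: xmono_def atMost_Suc)

lemma is_form_sub2:
  assumes "is_form 1 m F"
  shows "is_form n m (\<lambda>z. F (sub2 n v w z))"
proof -
  obtain c where c: "F = (\<lambda>x. \<Sum>a\<in>exps 1 m. c a * xmono 1 a x)" using assms by (auto simp: is_form_def)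
  have eq: "(\<lambda>z. F (sub2 n v w z)) = (\<lambda>z. \<Sum>a\<in>exps 1 m. c a * (lin n v z ^ a 0 * lin n w z ^ a 1))"
    by (simp add: c xmono_def sub2_def atMost_Suc mult.commute)
  have "is_form n m (\<lambda>z. c a * (lin n v z ^ a 0 * lin n w z ^ a 1))" if "a \<in> exps 1 m" for a
  proof -
    have "is_form n (a 0 * 1 + a 1 * 1) (\<lambda>z. lin n v z ^ a 0 * lin n w z ^ a 1)"
      by (intro is_form_mult is_form_pow is_form_lin)
    thus ?thesis using exps1_sum[OF that] by (intro is_form_smult) simp
  qed
  thus ?thesis unfolding eq by (intro is_form_sum) (auto simp: finite_exps)
qed

lemma inV_sub2:
  assumes "inV 1 e r G"
  shows "inV n e r (\<lambda>x y. G (sub2 n v w x) (sub2 n v w y))"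
proof -
  obtain k :: nat and c :: "nat \<Rightarrow> complex" and Fs :: "nat \<Rightarrow> nat \<Rightarrow> (nat \<Rightarrow> complex) \<Rightarrow> complex" where 1: "\<forall>j<k. \<forall>i<r. is_form 1 (2 * e) (Fs j i)"
    "G = (\<lambda>x y. \<Sum>j<k. c j * alpha_prod e r (Fs j) x y)" using assms(1) by (rule inV_E)
  define Fs' where "Fs' j i = (\<lambda>z. Fs j i (sub2 n v w z))" for j i
  have "\<forall>j<k. \<forall>i<r. is_form n (2 * e) (Fs' j i)" using 1(1) by (auto simp: Fs'_def is_form_sub2)
  moreover have "(\<lambda>x y. G (sub2 n v w x) (sub2 n v w y)) = (\<lambda>x y. \<Sum>j<k. c j * alpha_prod e r (Fs' j) x y)"
    by (simp add: 1(2) alpha_prod_def Fs'_def polar_sub2)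
  ultimately show ?thesis by (rule inV_I)
qed

section \<open>Coefficient extraction via roots of unity\<close>

definition omg :: "nat \<Rightarrow> complex" where "omg N = cis (2*pi/N)"

lemma omg_pow: "omg N ^ k = cis (2*pi*real k/N)"
  unfolding omg_def Complex.DeMoivre by (rule arg_cong[where f=cis]) (simp add: field_simps)

lemma omg_N: "N > 0 \<Longrightarrow> omg N ^ N = 1"
  by (simp add: omg_pow)

lemma omg_pow_mod: "N > 0 \<Longrightarrow> omg N ^ q = omg N ^ (q mod N)"
proof -
  assume N: "N > 0"
  have "omg N ^ q = omg N ^ (N * (q div N) + q mod N)" by simp
  also have "\<dots> = omg N ^ (N * (q div N)) * omg N ^ (q mod N)" by (rule power_add)
  also have "\<dots> = (omg N ^ N) ^ (q div N) * omg N ^ (q mod N)" by (simp only: power_mult)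
  also have "\<dots> = omg N ^ (q mod N)" using N by (simp add: omg_N)
  finally show ?thesis .
qed

lemma omg_ne1: "0 < k \<Longrightarrow> k < N \<Longrightarrow> omg N ^ k \<noteq> 1"
proof
  assume k: "0 < k" "k < N" and eq: "omg N ^ k = 1"
  have N: "N > 0" using k by simp
  let ?f = "\<lambda>k. cis (2 * pi * real k / real N)"
  have inj: "inj_on ?f {..<N}" using Complex.bij_betw_roots_unity[OF N] by (auto simp: bij_betw_def)
  have "?f k = ?f 0" using eq by (simp add: omg_pow)
  hence "k = 0" using inj_onD[OF inj] k N by auto
  thus False using k by simp
qed

lemma root_unity_sum:
  fixes N q :: nat
  assumes N: "N > 0"
  shows "(\<Sum>j<N. (omg N ^ q) ^ j) = (if N dvd q then of_nat N else 0)"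
proof (cases "N dvd q")
  case True
  have "omg N ^ q = 1" using N True by (subst omg_pow_mod) auto
  thus ?thesis using True by simp
next
  case False
  have z1: "omg N ^ q \<noteq> 1"
    using N False omg_ne1[of "q mod N" N] by (subst omg_pow_mod) (auto simp: dvd_eq_mod_eq_0)
  have zN: "(omg N ^ q) ^ N = 1" using N by (simp add: power_mult[symmetric] mult.commute[of q N] power_mult omg_N)
  have "(\<Sum>j<N. (omg N ^ q) ^ j) = 0" using z1 zN by (simp add: sum_gp_strict)
  thus ?thesis using False by simp
qed

lemma pow_pow_mult_aux: "(x^j)^a * (x^j)^b = (x^(a+b))^j" for x :: complex
  by (simp add: power_mult[symmetric] power_add[symmetric] algebra_simps)

lemma dft_coeff:
  fixes c :: "nat \<Rightarrow> complex"
  assumes k: "k < N"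
  shows "(\<Sum>j<N. (omg N ^ j) ^ (N - k) * (\<Sum>i<N. c i * (omg N ^ j) ^ i)) = of_nat N * c k"
proof -
  have N: "N > 0" using k by simp
  have "(\<Sum>j<N. (omg N ^ j) ^ (N - k) * (\<Sum>i<N. c i * (omg N ^ j) ^ i))
      = (\<Sum>j<N. \<Sum>i<N. c i * (omg N ^ (N - k + i)) ^ j)"
  proof (intro sum.cong refl)
    fix j
    have "(omg N ^ j) ^ (N - k) * (\<Sum>i<N. c i * (omg N ^ j) ^ i) = (\<Sum>i<N. c i * ((omg N ^ j) ^ (N - k) * (omg N ^ j) ^ i))"
      by (simp add: sum_distrib_left mult.left_commute)
    also have "\<dots> = (\<Sum>i<N. c i * (omg N ^ (N - k + i)) ^ j)" by (simp only: pow_pow_mult_aux)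
    finally show "(omg N ^ j) ^ (N - k) * (\<Sum>i<N. c i * (omg N ^ j) ^ i) = (\<Sum>i<N. c i * (omg N ^ (N - k + i)) ^ j)" .
  qed
  also have "\<dots> = (\<Sum>i<N. c i * (\<Sum>j<N. (omg N ^ (N - k + i)) ^ j))"
    by (subst sum.swap) (simp add: sum_distrib_left)
  also have "\<dots> = (\<Sum>i<N. c i * (if i = k then of_nat N else 0))"
  proof (intro sum.cong refl)
    fix i assume i: "i \<in> {..<N}"
    have "N dvd (N - k + i) \<longleftrightarrow> i = k"
    proof
      assume d: "N dvd (N - k + i)"
      have "0 < N - k + i" "N - k + i < 2 * N" using i k by auto
      with d obtain t where t: "N - k + i = N * t" "0 < N * t" "N * t < N * 2" by (metis dvd_def mult.commute)
      have "t \<noteq> 0" using t(2) by auto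
      moreover have "t < 2" using t(3) by simp
      ultimately have "t = 1" by arith
      thus "i = k" using t k by simp
    qed (use k in simp)
    thus "c i * (\<Sum>j<N. (omg N ^ (N - k + i)) ^ j) = c i * (if i = k then of_nat N else 0)"
      by (simp add: root_unity_sum[OF N])
  qed
  also have "\<dots> = (\<Sum>i<N. if i = k then c k * of_nat N else 0)" by (intro sum.cong refl) auto
  also have "\<dots> = of_nat N * c k" using k by (subst sum.delta) (auto simp: mult.commute)
  finally show ?thesis .
qed

lemma inV_coeff:
  assumes P: "\<And>s. inV n e r (\<lambda>x y. \<Sum>i<N. c i x y * s ^ i)" and k: "k < N"
  shows "inV n e r (c k)"
proof -
  have "inV n e r (\<lambda>x y. \<Sum>j<N. (1 / of_nat N * (omg N ^ j) ^ (N - k)) * (\<Sum>i<N. c i x y * (omg N ^ j) ^ i))"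
    by (intro inV_sum inV_smult P) auto
  moreover have "(\<Sum>j<N. (1 / of_nat N * (omg N ^ j) ^ (N - k)) * (\<Sum>i<N. c i x y * (omg N ^ j) ^ i)) = c k x y" for x y
  proof -
    have "(\<Sum>j<N. (1 / of_nat N * (omg N ^ j) ^ (N - k)) * (\<Sum>i<N. c i x y * (omg N ^ j) ^ i))
        = 1 / of_nat N * (\<Sum>j<N. (omg N ^ j) ^ (N - k) * (\<Sum>i<N. c i x y * (omg N ^ j) ^ i))"
      by (simp add: sum_distrib_left mult.assoc)
    also have "\<dots> = c k x y" using k by (subst dft_coeff[OF k]) simp
    finally show ?thesis .
  qed
  ultimately show ?thesis by (rule inV_cong)
qed

lemma coeff_as_values:
  fixes c :: "nat \<Rightarrow> complex"
  assumes k: "k < N"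
  shows "c k = (\<Sum>j<N. (1 / of_nat N * (omg N ^ j) ^ (N - k)) * (\<Sum>i<N. c i * (omg N ^ j) ^ i))"
proof -
  have "(\<Sum>j<N. (1 / of_nat N * (omg N ^ j) ^ (N - k)) * (\<Sum>i<N. c i * (omg N ^ j) ^ i))
      = 1 / of_nat N * (\<Sum>j<N. (omg N ^ j) ^ (N - k) * (\<Sum>i<N. c i * (omg N ^ j) ^ i))"
    by (simp add: sum_distrib_left mult.assoc)
  also have "\<dots> = c k" using k by (subst dft_coeff[OF k]) simp
  finally show ?thesis by simp
qed

lemma pderiv_sum': "pderiv (\<Sum>k\<in>A. f k) = (\<Sum>k\<in>A. pderiv (f k))"
  by (induction A rule: infinite_finite_induct) (simp_all add: pderiv_add)

lemma higher_pderiv_zero_big: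
  fixes u :: "complex poly"
  assumes "degree u < m"
  shows "(pderiv ^^ m) u = 0"
proof (rule poly_eqI)
  fix n
  have "coeff u (n + m) = 0" using assms by (intro coeff_eq_0) simp
  thus "coeff ((pderiv ^^ m) u) n = coeff 0 n" by (simp add: coeff_higher_pderiv)
qed

definition Tp :: "nat \<Rightarrow> complex poly \<Rightarrow> complex poly" where
  "Tp d u = (\<Sum>k\<le>d. smult ((-1)^k) ((pderiv ^^ k) u * (pderiv ^^ (d - k)) u))"

lemma pderiv_Tp:
  fixes u :: "complex poly"
  assumes "degree u \<le> d"
  shows "pderiv (Tp d u) = 0"
proof -
  define D where "D k = (pderiv ^^ k) u" for k
  have DS: "pderiv (D k) = D (Suc k)" for k by (simp add: D_def)
  define a where "a k = D k * D (d + 1 - k)" for k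
  define b where "b k = smult ((-1)^k) (a k)" for k
  have "pderiv (Tp d u) = (\<Sum>k\<le>d. smult ((-1)^k) (D k * D (Suc (d - k)) + D (Suc k) * D (d - k)))"
    unfolding Tp_def pderiv_sum' D_def[symmetric]
  proof (intro sum.cong refl)
    fix k
    show "pderiv (smult ((-1)^k) (D k * D (d - k))) = smult ((-1)^k) (D k * D (Suc (d - k)) + D (Suc k) * D (d - k))"
      by (simp only: pderiv_smult pderiv_mult DS mult.commute[of "D (d - k)"])
  qed
  also have "\<dots> = (\<Sum>k\<le>d. b k - b (Suc k))"
  proof (intro sum.cong refl)
    fix k assume "k \<in> {..d}"
    hence k: "k \<le> d" by simp
    have ak: "a k = D k * D (Suc (d - k))" using k by (simp add: a_def Suc_diff_le)
    have ak1: "a (Suc k) = D (Suc k) * D (d - k)" by (simp add: a_def)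
    show "smult ((-1)^k) (D k * D (Suc (d - k)) + D (Suc k) * D (d - k)) = b k - b (Suc k)"
      unfolding b_def ak ak1 by (simp add: smult_add_right)
  qed
  also have "\<dots> = b 0 - b (Suc d)" by (rule sum_telescope)
  also have "D (Suc d) = 0" unfolding D_def using assms by (intro higher_pderiv_zero_big) simp
  hence "b 0 - b (Suc d) = 0" by (simp add: b_def a_def)
  finally show ?thesis .
qed

lemma poly_Tp: "poly (Tp d u) s = (\<Sum>k\<le>d. (-1)^k * poly ((pderiv ^^ k) u) s * poly ((pderiv ^^ (d - k)) u) s)"
  by (simp add: Tp_def poly_sum mult.assoc)

lemma Tp_const:
  fixes u :: "complex poly"
  assumes "degree u \<le> d"
  shows "poly (Tp d u) s = poly (Tp d u) 0"
proof -
  have "degree (Tp d u) = 0" using pderiv_Tp[OF assms] by (simp add: pderiv_eq_0_iff)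
  hence e: "Tp d u = [:coeff (Tp d u) 0:]" by (simp add: degree_0_id)
  show ?thesis by (subst (1 2) e) simp
qed

lemma higher_pderiv_pcompose_shift:
  "(pderiv ^^ k) (pcompose u [:c, 1:]) = pcompose ((pderiv ^^ k) u) [:c, 1:]"
proof (induction k)
  case 0 thus ?case by simp
next
  case (Suc k)
  have "pderiv [:c, 1::'a:] = 1" by (simp add: pderiv_pCons)
  with Suc show ?case by (simp add: pderiv_pcompose)
qed

lemma poly_pcompose_shift0: "poly (pcompose p [:c, 1:]) 0 = poly p c"
  by (simp add: poly_pcompose)

lemma poly_higher_pderiv_shift:
  "poly ((pderiv ^^ k) u) c = fact k * coeff (pcompose u [:c, 1:]) k"
proof -
  have "poly ((pderiv ^^ k) u) c = poly ((pderiv ^^ k) (pcompose u [:c, 1:])) 0"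
    by (simp add: higher_pderiv_pcompose_shift poly_pcompose)
  also have "\<dots> = fact k * coeff (pcompose u [:c, 1:]) k" by (rule poly_higher_pderiv_0)
  finally show ?thesis .
qed

lemma pcompose_power_left': "pcompose (p ^ n) q = (pcompose p q) ^ n"
  by (induction n) (simp_all add: pcompose_mult pcompose_1)

lemma const_poly_pow: "[:c:] ^ m = [:c ^ m:]"
  by (induction m) (auto simp: mult.commute)

lemma coeff_lin_pow: "coeff ([:a, b:] ^ n) k = of_nat (n choose k) * a ^ (n - k) * b ^ k"
  for a b :: "'a::comm_ring_1"
proof -
  have eq: "[:a, b:] = monom b 1 + [:a:]" by (simp add: monom_Suc monom_0)
  have "[:a, b:] ^ n = (\<Sum>i\<le>n. of_nat (n choose i) * monom b 1 ^ i * [:a:] ^ (n - i))"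
    unfolding eq by (rule binomial_ring)
  also have "\<dots> = (\<Sum>i\<le>n. monom (of_nat (n choose i) * a ^ (n - i) * b ^ i) i)"
  proof (intro sum.cong refl)
    fix i
    have "of_nat (n choose i) * monom b 1 ^ i * [:a:] ^ (n - i)
        = monom (of_nat (n choose i)) 0 * monom (b ^ i) i * monom (a ^ (n - i)) 0"
      by (simp only: monom_power monom_0 const_poly_pow of_nat_poly mult_1)
    also have "\<dots> = monom (of_nat (n choose i) * b ^ i * a ^ (n - i)) i"
      by (simp only: mult_monom add_0 add_0_right)
    finally show "of_nat (n choose i) * monom b 1 ^ i * [:a:] ^ (n - i) = monom (of_nat (n choose i) * a ^ (n - i) * b ^ i) i"
      by (simp only: mult.assoc mult.commute[of "b ^ i"])
  qed
  finally show ?thesis by (simp add: coeff_sum binomial_eq_0)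
qed


definition Tsum :: "nat \<Rightarrow> complex poly \<Rightarrow> complex" where
  "Tsum d u = (\<Sum>k\<le>d. (-1)^k * fact k * fact (d - k) * coeff u k * coeff u (d - k))"

definition Kn :: "nat \<Rightarrow> nat \<Rightarrow> nat" where
  "Kn e j = (\<Sum>i\<le>e. fact (2*i) * fact (2*(2*e-j-i)) * (e choose i) * (e choose (2*e-j-i)))"

definition kappa :: "nat \<Rightarrow> nat \<Rightarrow> complex" where
  "kappa e j = (-1/4)^j * of_nat (Kn e j)"

lemma Kn_pos: "j \<le> e \<Longrightarrow> Kn e j > 0"
proof -
  assume j: "j \<le> e"
  have "0 < fact (2*e) * fact (2*(2*e-j-e)) * (e choose e) * (e choose (2*e-j-e))"
    using j by (simp add: zero_less_binomial_iff)
  also have "\<dots> \<le> Kn e j" unfolding Kn_def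
    by (rule member_le_sum[of e "{..e}" "\<lambda>i. fact (2*i) * fact (2*(2*e-j-i)) * (e choose i) * (e choose (2*e-j-i))"]) auto
  finally show ?thesis .
qed

lemma kappa_nonzero: "j \<le> e \<Longrightarrow> kappa e j \<noteq> 0"
  using Kn_pos[of j e] by (simp add: kappa_def)

lemma Tsum_via_shift:
  fixes u :: "complex poly"
  assumes "degree u \<le> d"
  shows "Tsum d u = (\<Sum>k\<le>d. (-1)^k * fact k * fact (d - k) * coeff (pcompose u [:c, 1:]) k * coeff (pcompose u [:c, 1:]) (d - k))"
proof -
  have "Tsum d u = poly (Tp d u) 0"
    by (simp add: Tsum_def poly_Tp poly_higher_pderiv_0 mult_ac)
  also have "\<dots> = poly (Tp d u) c" by (rule Tp_const[OF assms, symmetric])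
  also have "\<dots> = (\<Sum>k\<le>d. (-1)^k * fact k * fact (d - k) * coeff (pcompose u [:c, 1:]) k * coeff (pcompose u [:c, 1:]) (d - k))"
    by (simp add: poly_Tp poly_higher_pderiv_shift mult_ac)
  finally show ?thesis .
qed

lemma coeff_even_pow: "coeff ([:a, 0, b:] ^ n) k = (\<Sum>i\<le>n. if k = 2*i then of_nat (n choose i) * a ^ (n - i) * b ^ i else 0)"
  for a b :: "'a::comm_ring_1"
proof -
  have eq: "[:a, 0, b:] = monom b 2 + [:a:]" by (simp add: monom_Suc monom_0 numeral_2_eq_2)
  have "[:a, 0, b:] ^ n = (\<Sum>i\<le>n. of_nat (n choose i) * monom b 2 ^ i * [:a:] ^ (n - i))"
    unfolding eq by (rule binomial_ring)
  also have "\<dots> = (\<Sum>i\<le>n. monom (of_nat (n choose i) * a ^ (n - i) * b ^ i) (2*i))"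
  proof (intro sum.cong refl)
    fix i
    have "of_nat (n choose i) * monom b 2 ^ i * [:a:] ^ (n - i)
        = monom (of_nat (n choose i)) 0 * monom (b ^ i) (2*i) * monom (a ^ (n - i)) 0"
      by (simp only: monom_power monom_0 const_poly_pow of_nat_poly mult_1)
    also have "\<dots> = monom (of_nat (n choose i) * b ^ i * a ^ (n - i)) (2*i)"
      by (simp only: mult_monom add_0 add_0_right)
    finally show "of_nat (n choose i) * monom b 2 ^ i * [:a:] ^ (n - i) = monom (of_nat (n choose i) * a ^ (n - i) * b ^ i) (2*i)"
      by (simp only: mult.assoc mult.commute[of "b ^ i"])
  qed
  finally show ?thesis by (simp add: coeff_sum eq_commute)
qed


lemma even_sum_eval:
  fixes w :: "nat \<Rightarrow> complex" and e d h :: nat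
  assumes d: "d = 2*h" and he: "e \<le> h"
  shows "(\<Sum>k\<le>d. (-1)^k * fact k * fact (d-k) * (\<Sum>i\<le>e. if k = 2*i then w i else 0) * (\<Sum>i\<le>e. if d-k = 2*i then w i else 0))
      = (\<Sum>i\<le>e. if h - i \<le> e then fact (2*i) * fact (2*(h-i)) * w i * w (h-i) else 0)"
proof -
  define f :: "nat \<Rightarrow> complex" where "f k = (-1)^k * fact k * fact (d-k)" for k
  have "(\<Sum>k\<le>d. (-1)^k * fact k * fact (d-k) * (\<Sum>i\<le>e. if k = 2*i then w i else 0) * (\<Sum>i\<le>e. if d-k = 2*i then w i else 0))
      = (\<Sum>k\<le>d. \<Sum>i\<le>e. \<Sum>i'\<le>e. if k = 2*i \<and> d - k = 2*i' then f k * w i * w i' else 0)"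
  proof (intro sum.cong refl)
    fix k
    have "(\<Sum>i\<le>e. if k = 2*i then w i else 0) * (\<Sum>i\<le>e. if d-k = 2*i then w i else 0)
        = (\<Sum>i\<le>e. \<Sum>i'\<le>e. (if k = 2*i then w i else 0) * (if d-k = 2*i' then w i' else 0))"
      by (rule sum_product)
    also have "\<dots> = (\<Sum>i\<le>e. \<Sum>i'\<le>e. if k = 2*i \<and> d - k = 2*i' then w i * w i' else 0)"
      by (intro sum.cong refl) auto
    finally have XY: "(\<Sum>i\<le>e. if k = 2*i then w i else 0) * (\<Sum>i\<le>e. if d-k = 2*i then w i else 0)
        = (\<Sum>i\<le>e. \<Sum>i'\<le>e. if k = 2*i \<and> d - k = 2*i' then w i * w i' else 0)" .
    have "(-1)^k * fact k * fact (d-k) * (\<Sum>i\<le>e. if k = 2*i then w i else 0) * (\<Sum>i\<le>e. if d-k = 2*i then w i else 0)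
        = f k * ((\<Sum>i\<le>e. if k = 2*i then w i else 0) * (\<Sum>i\<le>e. if d-k = 2*i then w i else 0))"
      by (simp only: f_def mult.assoc)
    also have "\<dots> = f k * (\<Sum>i\<le>e. \<Sum>i'\<le>e. if k = 2*i \<and> d - k = 2*i' then w i * w i' else 0)"
      by (simp only: XY)
    also have "\<dots> = (\<Sum>i\<le>e. \<Sum>i'\<le>e. f k * (if k = 2*i \<and> d - k = 2*i' then w i * w i' else 0))"
      by (simp only: sum_distrib_left)
    also have "\<dots> = (\<Sum>i\<le>e. \<Sum>i'\<le>e. if k = 2*i \<and> d - k = 2*i' then f k * w i * w i' else 0)"
      by (intro sum.cong refl) (simp only: if_distrib[of "(*) (f k)"] mult_zero_right mult.assoc)
    finally show "(-1)^k * fact k * fact (d-k) * (\<Sum>i\<le>e. if k = 2*i then w i else 0) * (\<Sum>i\<le>e. if d-k = 2*i then w i else 0)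
        = (\<Sum>i\<le>e. \<Sum>i'\<le>e. if k = 2*i \<and> d - k = 2*i' then f k * w i * w i' else 0)" .
  qed
  also have "\<dots> = (\<Sum>i\<le>e. \<Sum>i'\<le>e. \<Sum>k\<le>d. if k = 2*i \<and> d - k = 2*i' then f k * w i * w i' else 0)"
  proof -
    have "(\<Sum>k\<le>d. \<Sum>i\<le>e. \<Sum>i'\<le>e. if k = 2*i \<and> d - k = 2*i' then f k * w i * w i' else 0)
        = (\<Sum>i\<le>e. \<Sum>k\<le>d. \<Sum>i'\<le>e. if k = 2*i \<and> d - k = 2*i' then f k * w i * w i' else 0)"
      by (rule sum.swap)
    also have "\<dots> = (\<Sum>i\<le>e. \<Sum>i'\<le>e. \<Sum>k\<le>d. if k = 2*i \<and> d - k = 2*i' then f k * w i * w i' else 0)"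
      by (rule sum.cong[OF refl]) (rule sum.swap)
    finally show ?thesis .
  qed
  also have "\<dots> = (\<Sum>i\<le>e. \<Sum>i'\<le>e. if i' = h - i then f (2*i) * w i * w i' else 0)"
  proof (intro sum.cong refl)
    fix i i' assume i: "i \<in> {..e}"
    have "(\<Sum>k\<le>d. if k = 2*i \<and> d - k = 2*i' then f k * w i * w i' else 0)
        = (\<Sum>k\<le>d. if k = 2*i then (if d - 2*i = 2*i' then f (2*i) * w i * w i' else 0) else 0)"
      by (intro sum.cong refl) auto
    also have "\<dots> = (if d - 2*i = 2*i' then f (2*i) * w i * w i' else 0)"
      using i he d by (subst sum.delta) auto
    also have "(d - 2*i = 2*i') = (i' = h - i)" using d by auto
    finally show "(\<Sum>k\<le>d. if k = 2*i \<and> d - k = 2*i' then f k * w i * w i' else 0)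
        = (if i' = h - i then f (2*i) * w i * w i' else 0)" by simp
  qed
  also have "\<dots> = (\<Sum>i\<le>e. if h - i \<le> e then f (2*i) * w i * w (h - i) else 0)"
    by (rule sum.cong[OF refl]) (subst sum.delta; auto)
  also have "\<dots> = (\<Sum>i\<le>e. if h - i \<le> e then fact (2*i) * fact (2*(h-i)) * w i * w (h-i) else 0)"
  proof (intro sum.cong refl)
    fix i
    have "d - 2*i = 2*(h-i)" using d by simp
    thus "(if h - i \<le> e then f (2*i) * w i * w (h - i) else 0) = (if h - i \<le> e then fact (2*i) * fact (2*(h-i)) * w i * w (h-i) else 0)"
      by (simp add: f_def)
  qed
  finally show ?thesis .
qed


lemma TI_nonzero:
  fixes A B C :: complex
  assumes j: "j \<le> e" and C: "C \<noteq> 0"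
  shows "Tsum (4*e-2*j) ([:A,B,C:]^e) = kappa e j * C^(2*e-2*j) * (B^2 - 4*A*C)^j"
proof -
  define d where "d = 4*e-2*j"
  define h where "h = 2*e-j"
  have dh: "d = 2*h" and eh: "e \<le> h" using j by (auto simp: d_def h_def)
  define s0 where "s0 = -B/(2*C)"
  define a0 where "a0 = -(B^2-4*A*C)/(4*C)"
  define w where "w i = of_nat (e choose i) * a0^(e-i) * C^i" for i
  have comp: "pcompose [:A,B,C:] [:s0,1:] = [:a0,0,C:]"
  proof -
    have "poly (pcompose [:A,B,C:] [:s0,1:]) x = poly [:a0,0,C:] x" for x
      using C by (simp add: poly_pcompose s0_def a0_def field_simps power2_eq_square)
    thus ?thesis by (intro poly_eq_poly_eq_iff[THEN iffD1] ext) auto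
  qed
  have "degree ([:A,B,C:]^e) \<le> degree [:A,B,C:] * e" by (rule degree_power_le)
  also have "\<dots> \<le> 2 * e" by (intro mult_right_mono) auto
  also have "\<dots> \<le> d" using j by (simp add: d_def)
  finally have deg: "degree ([:A,B,C:]^e) \<le> d" .
  have shift: "pcompose ([:A,B,C:]^e) [:s0,1:] = [:a0,0,C:]^e"
    by (simp add: pcompose_power_left' comp)
  have cf: "coeff ([:a0,0,C:]^e) k = (\<Sum>i\<le>e. if k = 2*i then w i else 0)" for k
    unfolding w_def by (rule coeff_even_pow)
  have "Tsum d ([:A,B,C:]^e) = (\<Sum>k\<le>d. (-1)^k * fact k * fact (d - k) * (\<Sum>i\<le>e. if k = 2*i then w i else 0) * (\<Sum>i\<le>e. if d-k = 2*i then w i else 0))"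
    by (simp add: Tsum_via_shift[OF deg, of s0] shift cf)
  also have "\<dots> = (\<Sum>i\<le>e. if h - i \<le> e then fact (2*i) * fact (2*(h-i)) * w i * w (h-i) else 0)"
    by (rule even_sum_eval[OF dh eh])
  also have "\<dots> = (\<Sum>i\<le>e. of_nat (fact (2*i) * fact (2*(2*e-j-i)) * (e choose i) * (e choose (2*e-j-i))) * (a0^j * C^h))"
  proof (rule sum.cong[OF refl])
    fix i assume "i \<in> {..e}"
    hence i: "i \<le> e" by simp
    show "(if h - i \<le> e then fact (2*i) * fact (2*(h-i)) * w i * w (h-i) else 0)
        = of_nat (fact (2*i) * fact (2*(2*e-j-i)) * (e choose i) * (e choose (2*e-j-i))) * (a0^j * C^h)"
    proof (cases "h - i \<le> e")
      case True
      have e1: "(e - i) + (e - (h - i)) = j" using i True eh j by (simp add: h_def)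
      have e2: "i + (h - i) = h" using i eh by simp
      have "w i * w (h-i) = of_nat (e choose i) * of_nat (e choose (h-i)) * (a0^((e - i) + (e - (h - i))) * C^(i + (h - i)))"
        unfolding w_def power_add by (simp add: mult_ac)
      also have "\<dots> = of_nat (e choose i) * of_nat (e choose (h-i)) * (a0^j * C^h)" by (simp only: e1 e2)
      finally show ?thesis using True by (simp add: h_def mult_ac)
    next
      case False
      hence "e choose (2*e-j-i) = 0" by (simp add: h_def)
      thus ?thesis using False by simp
    qed
  qed
  also have "\<dots> = of_nat (Kn e j) * (a0^j * C^h)"
    by (simp add: Kn_def sum_distrib_right)
  also have "a0^j * C^h = (-1/4)^j * (B^2 - 4*A*C)^j * C^(2*e-2*j)"
  proof -
    have "h = j + (2*e-2*j)" using j by (simp add: h_def)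
    hence "a0^j * C^h = (a0 * C)^j * C^(2*e-2*j)" by (simp add: power_add power_mult_distrib)
    also have "a0 * C = (-1/4) * (B^2 - 4*A*C)" using C by (simp add: a0_def field_simps)
    finally have "a0^j * C^h = ((-1/4) * (B^2 - 4*A*C))^j * C^(2*e-2*j)" .
    thus ?thesis by (simp only: power_mult_distrib)
  qed
  finally show ?thesis by (simp add: d_def kappa_def mult_ac)
qed

lemma Tsum_lin_small:
  fixes A B :: complex
  assumes "2*e < d"
  shows "Tsum d ([:A,B:]^e) = 0"
  unfolding Tsum_def
proof (rule sum.neutral, rule ballI)
  fix k assume "k \<in> {..d}"
  hence "e < k \<or> e < d - k" using assms by auto
  thus "(-1)^k * fact k * fact (d - k) * coeff ([:A,B:]^e) k * coeff ([:A,B:]^e) (d - k) = 0"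
    by (auto simp: coeff_lin_pow binomial_eq_0)
qed

lemma Tsum_lin_eq:
  fixes A B :: complex
  shows "Tsum (2*e) ([:A,B:]^e) = (-1)^e * fact e * fact e * B^(2*e)"
proof -
  have "Tsum (2*e) ([:A,B:]^e) = (\<Sum>k\<le>2*e. if k = e then (-1)^e * fact e * fact e * B^(2*e) else 0)"
    unfolding Tsum_def
  proof (rule sum.cong[OF refl])
    fix k assume "k \<in> {..2*e}"
    show "(-1)^k * fact k * fact (2*e - k) * coeff ([:A,B:]^e) k * coeff ([:A,B:]^e) (2*e - k)
        = (if k = e then (-1)^e * fact e * fact e * B^(2*e) else 0)"
    proof (cases "k = e")
      case True thus ?thesis by (simp add: coeff_lin_pow power_add[symmetric] mult_2)
    next
      case False
      hence "e < k \<or> e < 2*e - k" by auto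
      thus ?thesis using False by (auto simp: coeff_lin_pow binomial_eq_0)
    qed
  qed
  also have "\<dots> = (-1)^e * fact e * fact e * B^(2*e)" by (subst sum.delta) auto
  finally show ?thesis .
qed

lemma kappa_ee: "kappa e e = (-1)^e * fact e * fact e"
proof -
  define u :: "complex poly" where "u = [:0,2,1:]^e"
  have u: "u = monom 1 e * [:2,1:]^e"
  proof -
    have X: "[:0,2,1:] = (monom 1 1 :: complex poly) * [:2,1:]"
      by (intro poly_eq_poly_eq_iff[THEN iffD1] ext) (simp add: poly_monom algebra_simps)
    show ?thesis unfolding u_def X power_mult_distrib monom_power by simp
  qed
  have cu: "coeff u k = (if k < e then 0 else of_nat (e choose (k - e)) * 2^(e - (k - e)))" for k
    by (simp add: u coeff_monom_mult coeff_lin_pow)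
  have "Tsum (2*e) u = (\<Sum>k\<le>2*e. if k = e then (-1)^e * fact e * fact e * 4^e else 0)"
    unfolding Tsum_def
  proof (rule sum.cong[OF refl])
    fix k assume k: "k \<in> {..2*e}"
    show "(-1)^k * fact k * fact (2*e - k) * coeff u k * coeff u (2*e - k)
        = (if k = e then (-1)^e * fact e * fact e * 4^e else 0)"
    proof (cases "k = e")
      case True
      have "(2::complex)^e * 2^e = 4^e" by (simp add: power_mult_distrib[symmetric])
      thus ?thesis using True by (simp add: cu mult_2)
    next
      case False
      hence "k < e \<or> 2*e - k < e" using k by auto
      thus ?thesis using False by (auto simp: cu)
    qed
  qed
  also have "\<dots> = (-1)^e * fact e * fact e * 4^e" by (subst sum.delta) auto
  finally have 1: "Tsum (2*e) u = (-1)^e * fact e * fact e * 4^e" .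
  have "Tsum (4*e-2*e) u = kappa e e * 1^(2*e-2*e) * (2^2 - 4*0*1)^e"
    unfolding u_def by (rule TI_nonzero) auto
  hence "Tsum (2*e) u = kappa e e * 4^e" by simp
  with 1 have "kappa e e * 4^e = (-1)^e * fact e * fact e * 4^e" by simp
  thus ?thesis by simp
qed

theorem TI:
  fixes A B C :: complex
  assumes j: "j \<le> e"
  shows "Tsum (4*e-2*j) ([:A,B,C:]^e) = kappa e j * C^(2*e-2*j) * (B^2 - 4*A*C)^j"
proof (cases "C = 0")
  case False thus ?thesis using TI_nonzero[OF j False] by simp
next
  case True
  hence u: "[:A,B,C:] = [:A,B:]" by simp
  show ?thesis
  proof (cases "j < e")
    case True
    hence "Tsum (4*e-2*j) ([:A,B:]^e) = 0" by (intro Tsum_lin_small) auto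
    thus ?thesis using True \<open>C = 0\<close> by (simp add: u)
  next
    case False
    hence je: "j = e" using j by simp
    have "4*e-2*j = 2*e" using je by simp
    hence "Tsum (4*e-2*j) ([:A,B,C:]^e) = (-1)^e * fact e * fact e * B^(2*e)" by (simp only: u Tsum_lin_eq)
    moreover have "kappa e j * C^(2*e-2*j) * (B^2 - 4*A*C)^j = (-1)^e * fact e * fact e * B^(2*e)"
      using \<open>C = 0\<close> je by (simp add: kappa_ee power_mult)
    ultimately show ?thesis by simp
  qed
qed

section \<open>Binary forms\<close>

definition bA :: "(nat \<Rightarrow> complex) \<Rightarrow> (nat \<Rightarrow> complex) \<Rightarrow> complex" where "bA x y = x 0 * y 0"
definition bB :: "(nat \<Rightarrow> complex) \<Rightarrow> (nat \<Rightarrow> complex) \<Rightarrow> complex" where "bB x y = x 0 * y 1 + x 1 * y 0"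
definition bC :: "(nat \<Rightarrow> complex) \<Rightarrow> (nat \<Rightarrow> complex) \<Rightarrow> complex" where "bC x y = x 1 * y 1"
definition dlt :: "(nat \<Rightarrow> complex) \<Rightarrow> (nat \<Rightarrow> complex) \<Rightarrow> complex" where "dlt x y = (x 0 * y 1 - x 1 * y 0)^2"

lemma dlt_eq: "dlt x y = (bB x y)^2 - 4 * bA x y * bC x y"
  by (simp add: dlt_def bA_def bB_def bC_def power2_eq_square algebra_simps)

definition gk :: "nat \<Rightarrow> nat \<Rightarrow> (nat \<Rightarrow> complex) \<Rightarrow> (nat \<Rightarrow> complex) \<Rightarrow> complex" where
  "gk e k x y = coeff ([:bA x y, bB x y, bC x y:] ^ e) k"

definition mk :: "nat \<Rightarrow> nat \<Rightarrow> (nat \<Rightarrow> complex) \<Rightarrow> complex" where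
  "mk e k x = x 0 ^ (2*e - k) * x 1 ^ k"

lemma is_form_mk: "k \<le> 2*e \<Longrightarrow> is_form 1 (2*e) (mk e k)"
proof -
  assume k: "k \<le> 2*e"
  have X: "is_form 1 ((2*e-k)*1 + k*1) (\<lambda>x. lin 1 (\<lambda>l. if l = 0 then 1 else 0) x ^ (2*e-k) * lin 1 (\<lambda>l. if l = 1 then 1 else 0) x ^ k)"
    by (intro is_form_mult is_form_pow is_form_lin)
  have Y: "(\<lambda>x. lin 1 (\<lambda>l. if l = 0 then 1 else 0) x ^ (2*e-k) * lin 1 (\<lambda>l. if l = 1 then 1 else 0) x ^ k) = mk e k"
    by (simp add: lin_def mk_def atMost_Suc fun_eq_iff)
  have Z: "(2*e-k)*1 + k*1 = 2*e" using k by simp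
  show ?thesis using X unfolding Y Z .
qed

lemma poly_sum_le:
  fixes p :: "complex poly"
  assumes "degree p \<le> N"
  shows "poly p s = (\<Sum>k\<le>N. coeff p k * s ^ k)"
proof -
  have "poly p s = (\<Sum>k\<le>degree p. coeff p k * s ^ k)" by (rule poly_altdef)
  also have "\<dots> = (\<Sum>k\<le>N. coeff p k * s ^ k)"
    using assms by (intro sum.mono_neutral_left) (auto simp: coeff_eq_0)
  finally show ?thesis .
qed

lemma polar_mk:
  assumes k: "k \<le> 2*e"
  shows "of_nat (2*e choose k) * polar e (mk e k) x y = fact e * of_nat (2*e choose e) * gk e k x y"
proof -
  define L where "L s z = z 0 + s * z 1" for s :: complex and z :: "nat \<Rightarrow> complex"
  have hp: "has_pr (mk e k)" if "k \<le> 2*e" for k using that by (rule has_pr_form[OF is_form_mk])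
  have F: "(\<lambda>z. L s z ^ (2*e)) = (\<lambda>z. \<Sum>k\<le>2*e. (of_nat (2*e choose k) * s^k) * mk e k z)" for s
  proof
    fix z
    have "L s z ^ (2*e) = (s * z 1 + z 0) ^ (2*e)" by (simp add: L_def add.commute)
    also have "\<dots> = (\<Sum>k\<le>2*e. of_nat (2*e choose k) * (s * z 1) ^ k * z 0 ^ (2*e - k))"
      by (rule binomial_ring)
    also have "\<dots> = (\<Sum>k\<le>2*e. (of_nat (2*e choose k) * s^k) * mk e k z)"
      by (simp add: mk_def power_mult_distrib mult_ac)
    finally show "L s z ^ (2*e) = (\<Sum>k\<le>2*e. (of_nat (2*e choose k) * s^k) * mk e k z)" .
  qed
  have P1: "polar e (\<lambda>z. L s z ^ (2*e)) x y = (\<Sum>k\<le>2*e. (of_nat (2*e choose k) * s^k) * polar e (mk e k) x y)" for s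
    unfolding F by (rule polar_sum) (auto intro: hp)
  have P2: "polar e (\<lambda>z. L s z ^ (2*e)) x y = (\<Sum>k\<le>2*e. (fact e * of_nat (2*e choose e) * gk e k x y) * s^k)" for s
  proof -
    have "polar e (\<lambda>z. L s z ^ (2*e)) x y = fact e * coeff ([:L s x, L s y:] ^ (2*e)) e"
      by (rule polar_poly) (simp add: L_def algebra_simps)
    also have "\<dots> = fact e * of_nat (2*e choose e) * (L s x * L s y) ^ e"
      by (simp add: coeff_lin_pow power_mult_distrib mult_2)
    also have "L s x * L s y = poly [:bA x y, bB x y, bC x y:] s"
      by (simp add: L_def bA_def bB_def bC_def algebra_simps power2_eq_square)
    also have "(poly [:bA x y, bB x y, bC x y:] s) ^ e = poly ([:bA x y, bB x y, bC x y:] ^ e) s"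
      by (simp add: poly_power)
    also have "\<dots> = (\<Sum>k\<le>2*e. gk e k x y * s^k)"
    proof -
      have "degree ([:bA x y, bB x y, bC x y:] ^ e) \<le> degree [:bA x y, bB x y, bC x y:] * e"
        by (rule degree_power_le)
      also have "\<dots> \<le> 2 * e" by (intro mult_right_mono) auto
      finally show ?thesis unfolding gk_def by (rule poly_sum_le)
    qed
    finally show ?thesis by (simp add: sum_distrib_left mult_ac)
  qed
  have "\<forall>s. (\<Sum>k\<le>2*e. (of_nat (2*e choose k) * polar e (mk e k) x y) * s^k)
          = (\<Sum>k\<le>2*e. (fact e * of_nat (2*e choose e) * gk e k x y) * s^k)"
  proof
    fix s
    have "(\<Sum>k\<le>2*e. (of_nat (2*e choose k) * polar e (mk e k) x y) * s^k)
        = (\<Sum>k\<le>2*e. (of_nat (2*e choose k) * s^k) * polar e (mk e k) x y)"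
      by (simp add: mult_ac)
    also have "\<dots> = (\<Sum>k\<le>2*e. (fact e * of_nat (2*e choose e) * gk e k x y) * s^k)"
      using P1[of s] P2[of s] by simp
    finally show "(\<Sum>k\<le>2*e. (of_nat (2*e choose k) * polar e (mk e k) x y) * s^k)
          = (\<Sum>k\<le>2*e. (fact e * of_nat (2*e choose e) * gk e k x y) * s^k)" .
  qed
  hence "\<forall>k\<le>2*e. of_nat (2*e choose k) * polar e (mk e k) x y = fact e * of_nat (2*e choose e) * gk e k x y"
    by (subst (asm) polyfun_eq_coeffs)
  thus ?thesis using k by blast
qed

lemma gk_polar:
  assumes k: "k \<le> 2*e"
  shows "gk e k x y = (of_nat (2*e choose k) / (fact e * of_nat (2*e choose e))) * polar e (mk e k) x y"
proof -
  have nz: "(fact e * of_nat (2*e choose e) :: complex) \<noteq> 0" by simp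
  show ?thesis using polar_mk[OF k, of x y] nz by (simp add: field_simps)
qed

lemma gk_big: "2*e < k \<Longrightarrow> gk e k x y = 0"
proof -
  assume k: "2*e < k"
  have "degree ([:bA x y, bB x y, bC x y:] ^ e) \<le> degree [:bA x y, bB x y, bC x y:] * e"
    by (rule degree_power_le)
  also have "\<dots> \<le> 2 * e" by (intro mult_right_mono) auto
  finally show ?thesis unfolding gk_def using k by (intro coeff_eq_0) simp
qed

lemma inV_polar: "is_form 1 (2*e) F \<Longrightarrow> inV 1 e 1 (polar e F)"
proof -
  assume F: "is_form 1 (2*e) F"
  have "inV 1 e 1 (alpha_prod e 1 (\<lambda>_. F))" using F by (intro inV_single) auto
  moreover have "alpha_prod e 1 (\<lambda>_. F) = polar e F" by (simp add: alpha_prod_def fun_eq_iff)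
  ultimately show ?thesis by simp
qed

lemma inV_gk: "inV 1 e 1 (gk e k)"
proof (cases "k \<le> 2*e")
  case True
  have "inV 1 e 1 (\<lambda>x y. (of_nat (2*e choose k) / (fact e * of_nat (2*e choose e))) * polar e (mk e k) x y)"
    using True by (intro inV_smult inV_polar is_form_mk)
  thus ?thesis by (rule inV_cong) (simp add: gk_polar[OF True])
next
  case False
  have "inV 1 e 1 (\<lambda>x y. 0)" by (rule inV_zero)
  thus ?thesis by (rule inV_cong) (use False gk_big in auto)
qed

lemma inV_E_elem:
  assumes j: "j \<le> e"
  shows "inV 1 e 2 (\<lambda>x y. bC x y ^ (2*e - 2*j) * dlt x y ^ j)"
proof -
  define d where "d = 4*e - 2*j"
  have "inV 1 e (1+1) (\<lambda>x y. \<Sum>k\<le>d. ((-1)^k * fact k * fact (d - k)) * (gk e k x y * gk e (d - k) x y))"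
    by (intro inV_sum inV_smult inV_mult inV_gk) auto
  moreover have "(\<Sum>k\<le>d. ((-1)^k * fact k * fact (d - k)) * (gk e k x y * gk e (d - k) x y))
      = kappa e j * (bC x y ^ (2*e - 2*j) * dlt x y ^ j)" for x y
  proof -
    have "(\<Sum>k\<le>d. ((-1)^k * fact k * fact (d - k)) * (gk e k x y * gk e (d - k) x y))
        = Tsum d ([:bA x y, bB x y, bC x y:] ^ e)"
      by (simp add: Tsum_def gk_def mult_ac)
    also have "\<dots> = kappa e j * bC x y ^ (2*e - 2*j) * (bB x y ^ 2 - 4 * bA x y * bC x y) ^ j"
      unfolding d_def by (rule TI[OF j])
    finally show ?thesis by (simp add: dlt_eq mult_ac)
  qed
  ultimately have "inV 1 e 2 (\<lambda>x y. kappa e j * (bC x y ^ (2*e - 2*j) * dlt x y ^ j))" by (simp add: numeral_2_eq_2)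
  hence "inV 1 e 2 (\<lambda>x y. (1 / kappa e j) * (kappa e j * (bC x y ^ (2*e - 2*j) * dlt x y ^ j)))"
    by (rule inV_smult)
  thus ?thesis using kappa_nonzero[OF j] by simp
qed

section \<open>The core: all symmetric binary biforms of degree 2e\<close>

lemma sum_atMost_reflect: "(\<Sum>i\<le>k. f (k - i)) = (\<Sum>i\<le>(k::nat). f i)"
  by (rule sum.reindex_bij_witness[where i="\<lambda>i. k - i" and j="\<lambda>i. k - i"]) auto

definition X :: "nat \<Rightarrow> nat \<Rightarrow> (nat \<Rightarrow> complex) \<Rightarrow> complex" where
  "X m i x = x 0 ^ i * x 1 ^ (m - i)"

definition Sm :: "nat \<Rightarrow> nat \<Rightarrow> nat \<Rightarrow> (nat \<Rightarrow> complex) \<Rightarrow> (nat \<Rightarrow> complex) \<Rightarrow> complex" where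
  "Sm m k1 k2 x y = X m k1 x * X m k2 y + X m k2 x * X m k1 y"

lemma Sm_sym: "Sm m a b = Sm m b a"
  by (simp add: Sm_def fun_eq_iff add.commute)

lemma geom_diff: "(p - q) * (\<Sum>i\<le>nn. p^i * q^(nn - i)) = p^(Suc nn) - q^(Suc nn)" for p q :: complex
proof -
  have "p^(Suc nn) - q^(Suc nn) = (p - q) * (\<Sum>i<Suc nn. q^(Suc nn - Suc i) * p^i)"
    by (rule power_diff_sumr2)
  also have "(\<Sum>i<Suc nn. q^(Suc nn - Suc i) * p^i) = (\<Sum>i\<le>nn. p^i * q^(nn - i))"
    by (simp add: lessThan_Suc_atMost mult.commute)
  finally show ?thesis by simp
qed

lemma chain_id:
  fixes x0 x1 y0 y1 :: complex
  shows "x0^(a+nn+2)*x1^b * (y0^a*y1^(b+nn+2)) + x0^a*x1^(b+nn+2) * (y0^(a+nn+2)*y1^b)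
   - (x0^(a+nn+1)*x1^(b+1) * (y0^(a+1)*y1^(b+nn+1)) + x0^(a+1)*x1^(b+nn+1) * (y0^(a+nn+1)*y1^(b+1)))
   = (x0*y1 - x1*y0)^2 * (\<Sum>i\<le>nn. x0^(a+i)*x1^(b+nn-i) * (y0^(a+nn-i)*y1^(b+i)))"
proof -
  define p where "p = x0 * y1"
  define q where "q = x1 * y0"
  define M where "M = (x0*y0)^a * (x1*y1)^b"
  have L: "x0^(a+nn+2)*x1^b * (y0^a*y1^(b+nn+2)) + x0^a*x1^(b+nn+2) * (y0^(a+nn+2)*y1^b)
   - (x0^(a+nn+1)*x1^(b+1) * (y0^(a+1)*y1^(b+nn+1)) + x0^(a+1)*x1^(b+nn+1) * (y0^(a+nn+1)*y1^(b+1)))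
   = M * (p^(nn+2) + q^(nn+2) - p*q*(p^nn + q^nn))"
    by (simp add: M_def p_def q_def power_add power_mult_distrib algebra_simps)
  have R: "(\<Sum>i\<le>nn. x0^(a+i)*x1^(b+nn-i) * (y0^(a+nn-i)*y1^(b+i))) = M * (\<Sum>i\<le>nn. p^i * q^(nn - i))"
    unfolding sum_distrib_left
  proof (rule sum.cong[OF refl])
    fix i assume "i \<in> {..nn}"
    hence i: "i \<le> nn" by simp
    have "b + nn - i = b + (nn - i)" "a + nn - i = a + (nn - i)" using i by auto
    thus "x0^(a+i)*x1^(b+nn-i) * (y0^(a+nn-i)*y1^(b+i)) = M * (p^i * q^(nn - i))"
      by (simp add: M_def p_def q_def power_add power_mult_distrib algebra_simps)
  qed
  have "(p - q)^2 * (\<Sum>i\<le>nn. p^i * q^(nn - i)) = (p - q) * (p^(Suc nn) - q^(Suc nn))"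
    by (simp add: power2_eq_square geom_diff mult.assoc)
  also have "\<dots> = p^(nn+2) + q^(nn+2) - p*q*(p^nn + q^nn)"
    by (simp add: algebra_simps)
  finally have K: "(p - q)^2 * (\<Sum>i\<le>nn. p^i * q^(nn - i)) = p^(nn+2) + q^(nn+2) - p*q*(p^nn + q^nn)" .
  have pq: "x0*y1 - x1*y0 = p - q" by (simp add: p_def q_def)
  show ?thesis unfolding L R pq K[symmetric] by (simp only: mult_ac)
qed


lemma chain_step:
  assumes IH: "\<And>k1 k2. k1 \<le> m - 2 \<Longrightarrow> k2 \<le> m - 2 \<Longrightarrow> inV 1 e 2 (\<lambda>x y. dlt x y ^ Suc j * Sm (m - 2) k1 k2 x y)"
    and k1: "k1 = k2 + nn + 2" "k1 \<le> m"
  shows "inV 1 e 2 (\<lambda>x y. dlt x y ^ j * Sm m k1 k2 x y - dlt x y ^ j * Sm m (k1 - 1) (k2 + 1) x y)"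
proof -
  obtain b where m: "m = k2 + b + nn + 2" using k1 by (metis add.commute le_Suc_ex add.assoc)
  define a where "a = k2"
  have eq: "dlt x y ^ j * Sm m k1 k2 x y - dlt x y ^ j * Sm m (k1 - 1) (k2 + 1) x y
      = (\<Sum>i\<le>nn. (1/2) * (dlt x y ^ Suc j * Sm (m - 2) (a+i) (a+nn-i) x y))" for x y
  proof -
    have "Sm m k1 k2 x y - Sm m (k1 - 1) (k2 + 1) x y
       = x 0^(a+nn+2)*x 1^b * (y 0^a*y 1^(b+nn+2)) + x 0^a*x 1^(b+nn+2) * (y 0^(a+nn+2)*y 1^b)
         - (x 0^(a+nn+1)*x 1^(b+1) * (y 0^(a+1)*y 1^(b+nn+1)) + x 0^(a+1)*x 1^(b+nn+1) * (y 0^(a+nn+1)*y 1^(b+1)))"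
      unfolding Sm_def X_def k1 m a_def by (simp add: algebra_simps)
    also have "\<dots> = dlt x y * (\<Sum>i\<le>nn. x 0^(a+i)*x 1^(b+nn-i) * (y 0^(a+nn-i)*y 1^(b+i)))"
      unfolding dlt_def by (rule chain_id)
    also have "(\<Sum>i\<le>nn. x 0^(a+i)*x 1^(b+nn-i) * (y 0^(a+nn-i)*y 1^(b+i))) = (\<Sum>i\<le>nn. X (m-2) (a+i) x * X (m-2) (a+nn-i) y)"
    proof (rule sum.cong[OF refl])
      fix i assume "i \<in> {..nn}"
      hence i: "i \<le> nn" by simp
      have "m - 2 - (a + i) = b + nn - i" "m - 2 - (a + nn - i) = b + i" using i by (auto simp: m a_def)
      thus "x 0^(a+i)*x 1^(b+nn-i) * (y 0^(a+nn-i)*y 1^(b+i)) = X (m-2) (a+i) x * X (m-2) (a+nn-i) y"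
        by (simp add: X_def)
    qed
    also have "(\<Sum>i\<le>nn. X (m-2) (a+i) x * X (m-2) (a+nn-i) y) = (\<Sum>i\<le>nn. (1/2) * Sm (m-2) (a+i) (a+nn-i) x y)"
    proof -
      have "(\<Sum>i\<le>nn. X (m-2) (a+nn-i) x * X (m-2) (a+i) y) = (\<Sum>i\<le>nn. X (m-2) (a+(nn-i)) x * X (m-2) (a+nn-(nn-i)) y)"
        by (rule sum.cong[OF refl]) auto
      also have "\<dots> = (\<Sum>i\<le>nn. X (m-2) (a+i) x * X (m-2) (a+nn-i) y)"
        by (rule sum_atMost_reflect[where f="\<lambda>i. X (m-2) (a+i) x * X (m-2) (a+nn-i) y"])
      finally have r: "(\<Sum>i\<le>nn. X (m-2) (a+nn-i) x * X (m-2) (a+i) y) = (\<Sum>i\<le>nn. X (m-2) (a+i) x * X (m-2) (a+nn-i) y)" .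
      have "(\<Sum>i\<le>nn. (1/2) * Sm (m-2) (a+i) (a+nn-i) x y)
          = (1/2) * ((\<Sum>i\<le>nn. X (m-2) (a+i) x * X (m-2) (a+nn-i) y) + (\<Sum>i\<le>nn. X (m-2) (a+nn-i) x * X (m-2) (a+i) y))"
        by (simp only: Sm_def sum_distrib_left[symmetric] sum.distrib)
      also have "\<dots> = (\<Sum>i\<le>nn. X (m-2) (a+i) x * X (m-2) (a+nn-i) y)" unfolding r by simp
      finally show ?thesis by simp
    qed
    finally show ?thesis by (simp add: right_diff_distrib[symmetric] sum_distrib_left mult_ac)
  qed
  have "inV 1 e 2 (\<lambda>x y. \<Sum>i\<le>nn. (1/2) * (dlt x y ^ Suc j * Sm (m - 2) (a+i) (a+nn-i) x y))"
  proof (intro inV_sum inV_smult)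
    fix i assume "i \<in> {..nn}"
    hence "a + i \<le> m - 2" "a + nn - i \<le> m - 2" by (auto simp: m a_def)
    thus "inV 1 e 2 (\<lambda>x y. dlt x y ^ Suc j * Sm (m - 2) (a+i) (a+nn-i) x y)" by (rule IH)
  qed simp
  thus ?thesis by (rule inV_cong) (rule eq[symmetric])
qed


definition Tk :: "nat \<Rightarrow> nat \<Rightarrow> (nat \<Rightarrow> complex) \<Rightarrow> (nat \<Rightarrow> complex) \<Rightarrow> complex" where
  "Tk m k x y = coeff ([:x 1, x 0:]^m * [:y 1, y 0:]^m) k"

lemma Tk_expand:
  "2 * Tk m k x y = (\<Sum>i\<le>k. of_nat (m choose i) * of_nat (m choose (k-i)) * Sm m i (k-i) x y)"
proof -
  define f where "f i = of_nat (m choose i) * of_nat (m choose (k-i)) * (X m i x * X m (k-i) y)" for i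
  have T: "Tk m k x y = (\<Sum>i\<le>k. f i)"
    unfolding Tk_def coeff_mult f_def
  proof (rule sum.cong[OF refl])
    fix i
    show "coeff ([:x 1, x 0:] ^ m) i * coeff ([:y 1, y 0:] ^ m) (k - i)
        = of_nat (m choose i) * of_nat (m choose (k - i)) * (X m i x * X m (k - i) y)"
      by (simp add: coeff_lin_pow X_def mult_ac)
  qed
  have "(\<Sum>i\<le>k. f i) = (\<Sum>i\<le>k. f (k - i))" by (rule sum_atMost_reflect[symmetric])
  also have "\<dots> = (\<Sum>i\<le>k. of_nat (m choose i) * of_nat (m choose (k-i)) * (X m (k-i) x * X m i y))"
    by (rule sum.cong[OF refl]) (auto simp: f_def mult_ac)
  finally have T2: "Tk m k x y = (\<Sum>i\<le>k. of_nat (m choose i) * of_nat (m choose (k-i)) * (X m (k-i) x * X m i y))"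
    using T by simp
  have "2 * Tk m k x y = (\<Sum>i\<le>k. f i) + (\<Sum>i\<le>k. of_nat (m choose i) * of_nat (m choose (k-i)) * (X m (k-i) x * X m i y))"
    using T T2 by simp
  also have "\<dots> = (\<Sum>i\<le>k. of_nat (m choose i) * of_nat (m choose (k-i)) * Sm m i (k-i) x y)"
    by (simp add: f_def Sm_def sum.distrib[symmetric] algebra_simps)
  finally show ?thesis .
qed

lemma lin1_0: "lin 1 (\<lambda>l. if l = 0 then 1 else 0) x = x 0"
  by (simp add: lin_def atMost_Suc)

lemma lin1_s: "lin 1 (\<lambda>l. if l = 0 then s else 1) x = s * x 0 + x 1"
  by (simp add: lin_def atMost_Suc)

lemma inV_Tk:
  assumes j: "j \<le> e" and m: "m = 2*e - 2*j" and k: "k \<le> 2*m"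
  shows "inV 1 e 2 (\<lambda>x y. dlt x y ^ j * Tk m k x y)"
proof -
  define v :: "nat \<Rightarrow> complex" where "v = (\<lambda>l. if l = 0 then 1 else 0)"
  have P: "inV 1 e 2 (\<lambda>x y. \<Sum>i<Suc (2*m). (dlt x y ^ j * Tk m i x y) * s ^ i)" for s
  proof -
    define w :: "nat \<Rightarrow> complex" where "w = (\<lambda>l. if l = 0 then s else 1)"
    have "inV 1 e 2 (\<lambda>x y. bC (sub2 1 v w x) (sub2 1 v w y) ^ (2*e - 2*j) * dlt (sub2 1 v w x) (sub2 1 v w y) ^ j)"
      by (intro inV_sub2 inV_E_elem j)
    moreover have "bC (sub2 1 v w x) (sub2 1 v w y) ^ (2*e - 2*j) * dlt (sub2 1 v w x) (sub2 1 v w y) ^ j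
        = (\<Sum>i<Suc (2*m). (dlt x y ^ j * Tk m i x y) * s ^ i)" for x y
    proof -
      have s0: "sub2 1 v w z 0 = z 0" "sub2 1 v w z 1 = s * z 0 + z 1" for z
        by (simp_all add: sub2_def v_def w_def lin_def atMost_Suc)
      have "bC (sub2 1 v w x) (sub2 1 v w y) = poly [:x 1, x 0:] s * poly [:y 1, y 0:] s"
        unfolding bC_def s0 by (simp add: algebra_simps)
      hence "bC (sub2 1 v w x) (sub2 1 v w y) ^ m = poly ([:x 1, x 0:]^m * [:y 1, y 0:]^m) s"
        by (simp only: power_mult_distrib poly_power poly_mult)
      also have "\<dots> = (\<Sum>i\<le>2*m. Tk m i x y * s ^ i)"
      proof -
        have "degree ([:x 1, x 0:]^m * [:y 1, y 0:]^m) \<le> degree ([:x 1, x 0:]^m) + degree ([:y 1, y 0:]^m)"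
          by (rule degree_mult_le)
        also have "\<dots> \<le> degree [:x 1, x 0:] * m + degree [:y 1, y 0:] * m"
          by (intro add_mono degree_power_le)
        also have "\<dots> \<le> 1 * m + 1 * m" by (intro add_mono mult_right_mono) auto
        finally show ?thesis unfolding Tk_def by (intro poly_sum_le) simp
      qed
      finally have bc: "bC (sub2 1 v w x) (sub2 1 v w y) ^ m = (\<Sum>i\<le>2*m. Tk m i x y * s ^ i)" .
      have dd: "dlt (sub2 1 v w x) (sub2 1 v w y) = dlt x y"
        unfolding dlt_def s0 by (simp add: algebra_simps)
      show ?thesis unfolding m[symmetric] bc dd lessThan_Suc_atMost
        by (simp add: sum_distrib_left mult_ac)
    qed
    ultimately show ?thesis by (rule inV_cong)
  qed
  show ?thesis using inV_coeff[where c="\<lambda>i x y. dlt x y ^ j * Tk m i x y", OF P] k by simp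
qed


lemma chain_all:
  assumes IH: "\<And>k1 k2. 2 \<le> m \<Longrightarrow> k1 \<le> m - 2 \<Longrightarrow> k2 \<le> m - 2 \<Longrightarrow> inV 1 e 2 (\<lambda>x y. dlt x y ^ Suc j * Sm (m - 2) k1 k2 x y)"
  shows "i \<le> k div 2 \<Longrightarrow> k - i \<le> m \<Longrightarrow>
    inV 1 e 2 (\<lambda>x y. dlt x y ^ j * Sm m (k - i) i x y - dlt x y ^ j * Sm m (k - k div 2) (k div 2) x y)"
proof (induction "k div 2 - i" arbitrary: i)
  case 0
  hence "i = k div 2" by simp
  thus ?case using inV_zero[of 1 e 2] by simp
next
  case (Suc t)
  have i: "i < k div 2" "k - i \<le> m" using Suc(2,4) by auto
  have i2: "2*i + 2 \<le> k" using i(1) by presburger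
  have ki: "k - i = i + (k - 2*i - 2) + 2" using i2 by arith
  have m2: "2 \<le> m" using i(2) i2 by arith
  have IH': "\<And>k1 k2. k1 \<le> m - 2 \<Longrightarrow> k2 \<le> m - 2 \<Longrightarrow> inV 1 e 2 (\<lambda>x y. dlt x y ^ Suc j * Sm (m - 2) k1 k2 x y)"
    using IH m2 by blast
  have A: "inV 1 e 2 (\<lambda>x y. dlt x y ^ j * Sm m (k - i) i x y - dlt x y ^ j * Sm m (k - i - 1) (i + 1) x y)"
    by (rule chain_step[where nn="k - 2*i - 2", OF IH' ki i(2)])
  have t: "t = k div 2 - Suc i" using Suc(2) by arith
  have "Suc i \<le> k div 2" "k - Suc i \<le> m" using i by auto
  hence B: "inV 1 e 2 (\<lambda>x y. dlt x y ^ j * Sm m (k - Suc i) (Suc i) x y - dlt x y ^ j * Sm m (k - k div 2) (k div 2) x y)"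
    using Suc(1)[OF t] by blast
  have "inV 1 e 2 (\<lambda>x y. (dlt x y ^ j * Sm m (k - i) i x y - dlt x y ^ j * Sm m (k - i - 1) (i + 1) x y)
      + (dlt x y ^ j * Sm m (k - Suc i) (Suc i) x y - dlt x y ^ j * Sm m (k - k div 2) (k div 2) x y))"
    by (rule inV_add[OF A B])
  thus ?case by (rule inV_cong) simp
qed

lemma core_level:
  assumes j: "j \<le> e" and m: "m = 2*e - 2*j"
    and IH: "\<And>k1 k2. 2 \<le> m \<Longrightarrow> k1 \<le> m - 2 \<Longrightarrow> k2 \<le> m - 2 \<Longrightarrow> inV 1 e 2 (\<lambda>x y. dlt x y ^ Suc j * Sm (m - 2) k1 k2 x y)"
    and k1: "k1 \<le> m" and k2: "k2 \<le> m"
  shows "inV 1 e 2 (\<lambda>x y. dlt x y ^ j * Sm m k1 k2 x y)"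
proof -
  define k where "k = k1 + k2"
  have k2m: "k \<le> 2*m" using k1 k2 by (simp add: k_def)
  define \<sigma> where "\<sigma> x y = Sm m (k - k div 2) (k div 2) x y" for x y
  have chain: "inV 1 e 2 (\<lambda>x y. dlt x y ^ j * Sm m i (k - i) x y - dlt x y ^ j * \<sigma> x y)"
    if "i \<le> k" "i \<le> m" "k - i \<le> m" for i
  proof (cases "i \<le> k div 2")
    case True
    have "inV 1 e 2 (\<lambda>x y. dlt x y ^ j * Sm m (k - i) i x y - dlt x y ^ j * \<sigma> x y)"
      unfolding \<sigma>_def by (rule chain_all[OF IH]) (use True that in auto)
    thus ?thesis by (simp add: Sm_sym[of m i])
  next
    case False
    have "inV 1 e 2 (\<lambda>x y. dlt x y ^ j * Sm m (k - (k - i)) (k - i) x y - dlt x y ^ j * \<sigma> x y)"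
      unfolding \<sigma>_def by (rule chain_all[OF IH]) (use False that in auto)
    moreover have "k - (k - i) = i" using that by simp
    ultimately show ?thesis by simp
  qed
  define cc where "cc i = (of_nat (m choose i) * of_nat (m choose (k-i)) :: complex)" for i
  have D: "inV 1 e 2 (\<lambda>x y. \<Sum>i\<le>k. cc i * (dlt x y ^ j * Sm m i (k - i) x y - dlt x y ^ j * \<sigma> x y))"
  proof (intro inV_sum)
    fix i assume "i \<in> {..k}"
    hence i: "i \<le> k" by simp
    show "inV 1 e 2 (\<lambda>x y. cc i * (dlt x y ^ j * Sm m i (k - i) x y - dlt x y ^ j * \<sigma> x y))"
    proof (cases "i \<le> m \<and> k - i \<le> m")
      case True thus ?thesis using chain[OF i] by (intro inV_smult) auto
    next
      case False
      hence "cc i = 0" by (auto simp: cc_def binomial_eq_0)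
      thus ?thesis using inV_zero[of 1 e 2] by simp
    qed
  qed simp
  have T: "inV 1 e 2 (\<lambda>x y. 2 * (dlt x y ^ j * Tk m k x y))"
    by (intro inV_smult inV_Tk[OF j m k2m])
  have "inV 1 e 2 (\<lambda>x y. 2 * (dlt x y ^ j * Tk m k x y) - (\<Sum>i\<le>k. cc i * (dlt x y ^ j * Sm m i (k - i) x y - dlt x y ^ j * \<sigma> x y)))"
    by (rule inV_diff[OF T D])
  moreover have "2 * (dlt x y ^ j * Tk m k x y) - (\<Sum>i\<le>k. cc i * (dlt x y ^ j * Sm m i (k - i) x y - dlt x y ^ j * \<sigma> x y))
      = (\<Sum>i\<le>k. cc i) * (dlt x y ^ j * \<sigma> x y)" for x y
  proof -
    have "2 * (dlt x y ^ j * Tk m k x y) = dlt x y ^ j * (2 * Tk m k x y)" by simp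
    also have "\<dots> = (\<Sum>i\<le>k. cc i * (dlt x y ^ j * Sm m i (k - i) x y))"
      by (simp add: Tk_expand cc_def sum_distrib_left mult_ac)
    finally show ?thesis by (simp add: right_diff_distrib sum_subtractf sum_distrib_right)
  qed
  ultimately have E: "inV 1 e 2 (\<lambda>x y. (\<Sum>i\<le>k. cc i) * (dlt x y ^ j * \<sigma> x y))" by (rule inV_cong)
  have h2: "k div 2 \<le> m \<and> k - k div 2 \<le> m" using k2m by presburger
  have "(0::nat) < (m choose (k div 2)) * (m choose (k - k div 2))"
    using h2 by (simp add: zero_less_binomial_iff)
  also have "\<dots> \<le> (\<Sum>i\<le>k. (m choose i) * (m choose (k - i)))"
    by (rule member_le_sum[where f="\<lambda>i. (m choose i) * (m choose (k - i))"]) auto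
  finally have pos: "0 < (\<Sum>i\<le>k. (m choose i) * (m choose (k - i)))" .
  have "(\<Sum>i\<le>k. cc i) = of_nat (\<Sum>i\<le>k. (m choose i) * (m choose (k - i)))" by (simp add: cc_def)
  hence "(\<Sum>i\<le>k. cc i) \<noteq> 0" using pos by (simp only: of_nat_eq_0_iff)
  hence S: "inV 1 e 2 (\<lambda>x y. dlt x y ^ j * \<sigma> x y)"
    using inV_smult[OF E, of "1 / (\<Sum>i\<le>k. cc i)"] by simp
  have "inV 1 e 2 (\<lambda>x y. (dlt x y ^ j * Sm m k1 (k - k1) x y - dlt x y ^ j * \<sigma> x y) + dlt x y ^ j * \<sigma> x y)"
    by (rule inV_add[OF chain S]) (use k1 k2 in \<open>auto simp: k_def\<close>)
  thus ?thesis by (rule inV_cong) (simp add: k_def)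
qed

lemma core_all:
  assumes "t \<le> e"
  shows "\<forall>k1 k2. k1 \<le> 2*t \<longrightarrow> k2 \<le> 2*t \<longrightarrow> inV 1 e 2 (\<lambda>x y. dlt x y ^ (e - t) * Sm (2*t) k1 k2 x y)"
  using assms
proof (induction t)
  case 0
  show ?case
  proof (intro allI impI)
    fix k1 k2 :: nat assume k: "k1 \<le> 2*0" "k2 \<le> 2*0"
    have "inV 1 e 2 (\<lambda>x y. dlt x y ^ e * Sm 0 k1 k2 x y)"
      by (rule core_level[where j=e]) (use k in auto)
    thus "inV 1 e 2 (\<lambda>x y. dlt x y ^ (e - 0) * Sm (2*0) k1 k2 x y)" by simp
  qed
next
  case (Suc t)
  hence IH: "\<forall>k1 k2. k1 \<le> 2*t \<longrightarrow> k2 \<le> 2*t \<longrightarrow> inV 1 e 2 (\<lambda>x y. dlt x y ^ (e - t) * Sm (2*t) k1 k2 x y)"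
    by simp
  show ?case
  proof (intro allI impI)
    fix k1 k2 :: nat assume k: "k1 \<le> 2*Suc t" "k2 \<le> 2*Suc t"
    have et: "Suc (e - Suc t) = e - t" "2 * Suc t - 2 = 2*t" using Suc(2) by auto
    show "inV 1 e 2 (\<lambda>x y. dlt x y ^ (e - Suc t) * Sm (2*Suc t) k1 k2 x y)"
      by (rule core_level[where j="e - Suc t"]) (use Suc(2) k IH et in auto)
  qed
qed

theorem core:
  assumes "k1 \<le> 2*e" "k2 \<le> 2*e"
  shows "inV 1 e 2 (Sm (2*e) k1 k2)"
  using core_all[of e e] assms by simp

section \<open>Polynomials in A, B, C\<close>

inductive abc :: "nat \<Rightarrow> ((nat \<Rightarrow> complex) \<Rightarrow> (nat \<Rightarrow> complex) \<Rightarrow> complex) \<Rightarrow> bool" where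
  abc_mono: "abc (a+b+c) (\<lambda>x y. bA x y ^ a * bB x y ^ b * bC x y ^ c)"
| abc_add: "abc m f \<Longrightarrow> abc m g \<Longrightarrow> abc m (\<lambda>x y. f x y + g x y)"
| abc_smult: "abc m f \<Longrightarrow> abc m (\<lambda>x y. s * f x y)"

lemma abc_cong: "abc m f \<Longrightarrow> (\<And>x y. f x y = g x y) \<Longrightarrow> abc m g"
proof -
  assume "abc m f" "\<And>x y. f x y = g x y"
  moreover have "f = g" using \<open>\<And>x y. f x y = g x y\<close> by (simp add: fun_eq_iff)
  ultimately show ?thesis by simp
qed

lemma abc_deg: "abc m f \<Longrightarrow> m = m' \<Longrightarrow> abc m' f" by simp

lemma abc_zero: "abc m (\<lambda>x y. 0)"
proof -
  have "abc (m+0+0) (\<lambda>x y. bA x y ^ m * bB x y ^ 0 * bC x y ^ 0)" by (rule abc_mono)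
  hence "abc m (\<lambda>x y. 0 * (bA x y ^ m * bB x y ^ 0 * bC x y ^ 0))" by (intro abc_smult) simp
  thus ?thesis by (rule abc_cong) simp
qed

lemma abc_const: "abc 0 (\<lambda>x y. s)"
proof -
  have "abc (0+0+0) (\<lambda>x y. bA x y ^ 0 * bB x y ^ 0 * bC x y ^ 0)" by (rule abc_mono)
  hence "abc 0 (\<lambda>x y. s * (bA x y ^ 0 * bB x y ^ 0 * bC x y ^ 0))" by (intro abc_smult) simp
  thus ?thesis by (rule abc_cong) simp
qed

lemma abc_A: "abc 1 bA"
  using abc_mono[of 1 0 0] by (simp add: abc_cong)
lemma abc_B: "abc 1 bB"
  using abc_mono[of 0 1 0] by (simp add: abc_cong)
lemma abc_C: "abc 1 bC"
  using abc_mono[of 0 0 1] by (simp add: abc_cong)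

lemma abc_diff: "abc m f \<Longrightarrow> abc m g \<Longrightarrow> abc m (\<lambda>x y. f x y - g x y)"
proof -
  assume "abc m f" "abc m g"
  hence "abc m (\<lambda>x y. f x y + (-1) * g x y)" by (intro abc_add abc_smult)
  thus ?thesis by (rule abc_cong) simp
qed

lemma abc_sum:
  assumes "finite S" "\<And>s. s \<in> S \<Longrightarrow> abc m (f s)"
  shows "abc m (\<lambda>x y. \<Sum>s\<in>S. f s x y)"
  using assms
proof (induction S rule: finite_induct)
  case empty thus ?case by (simp add: abc_zero)
next
  case (insert s S) thus ?case by (simp add: abc_add)
qed

lemma abc_mult_mono:
  assumes "abc m g"
  shows "abc (a+b+c+m) (\<lambda>x y. (bA x y ^ a * bB x y ^ b * bC x y ^ c) * g x y)"
  using assms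
proof (induction rule: abc.induct)
  case (abc_mono a' b' c')
  have "abc ((a+a')+(b+b')+(c+c')) (\<lambda>x y. bA x y ^ (a+a') * bB x y ^ (b+b') * bC x y ^ (c+c'))"
    by (rule abc_mono)
  hence "abc (a+b+c+(a'+b'+c')) (\<lambda>x y. bA x y ^ (a+a') * bB x y ^ (b+b') * bC x y ^ (c+c'))"
    by (rule abc_deg) simp
  thus ?case by (rule abc_cong) (simp add: power_add mult_ac)
next
  case (abc_add m f g)
  hence "abc (a+b+c+m) (\<lambda>x y. (bA x y ^ a * bB x y ^ b * bC x y ^ c) * f x y + (bA x y ^ a * bB x y ^ b * bC x y ^ c) * g x y)"
    by (intro abc.abc_add)
  thus ?case by (rule abc_cong) (simp add: algebra_simps)
next
  case (abc_smult m f s)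
  hence "abc (a+b+c+m) (\<lambda>x y. s * ((bA x y ^ a * bB x y ^ b * bC x y ^ c) * f x y))"
    by (intro abc.abc_smult)
  thus ?case by (rule abc_cong) (simp add: algebra_simps)
qed

lemma abc_mult:
  assumes "abc m f" "abc m' g"
  shows "abc (m+m') (\<lambda>x y. f x y * g x y)"
  using assms(1)
proof (induction rule: abc.induct)
  case (abc_mono a b c) thus ?case using abc_mult_mono[OF assms(2)] by simp
next
  case (abc_add m f1 f2)
  hence "abc (m+m') (\<lambda>x y. f1 x y * g x y + f2 x y * g x y)" by (intro abc.abc_add)
  thus ?case by (rule abc_cong) (simp add: algebra_simps)
next
  case (abc_smult m f s)
  hence "abc (m+m') (\<lambda>x y. s * (f x y * g x y))" by (intro abc.abc_smult)
  thus ?case by (rule abc_cong) (simp add: algebra_simps)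
qed

lemma abc_pow: "abc m f \<Longrightarrow> abc (k*m) (\<lambda>x y. f x y ^ k)"
proof (induction k)
  case 0 thus ?case using abc_const[of 1] by simp
next
  case (Suc k)
  hence "abc (m + k*m) (\<lambda>x y. f x y * f x y ^ k)" by (intro abc_mult)
  thus ?case by simp
qed

definition pw :: "nat \<Rightarrow> (nat \<Rightarrow> complex) \<Rightarrow> (nat \<Rightarrow> complex) \<Rightarrow> complex" where
  "pw d x y = (x 0 * y 1) ^ d + (x 1 * y 0) ^ d"

lemma abc_pw2: "abc d (pw d) \<and> abc (Suc d) (pw (Suc d))"
proof (induction d)
  case 0
  have "abc 0 (\<lambda>x y. 2)" by (rule abc_const)
  hence a: "abc 0 (pw 0)" by (rule abc_cong) (simp add: pw_def)
  have b: "abc 1 (pw 1)" using abc_B by (rule abc_cong) (simp add: pw_def bB_def)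
  show ?case using a b by simp
next
  case (Suc d)
  have "abc (1 + Suc d) (\<lambda>x y. bB x y * pw (Suc d) x y)" using Suc abc_B by (intro abc_mult) auto
  moreover have "abc ((1+1) + d) (\<lambda>x y. (bA x y * bC x y) * pw d x y)" using Suc abc_A abc_C by (intro abc_mult) auto
  ultimately have "abc (Suc (Suc d)) (\<lambda>x y. bB x y * pw (Suc d) x y - (bA x y * bC x y) * pw d x y)"
    by (intro abc_diff) auto
  hence "abc (Suc (Suc d)) (pw (Suc (Suc d)))"
    by (rule abc_cong) (simp add: pw_def bA_def bB_def bC_def algebra_simps)
  thus ?case using Suc by simp
qed

lemma abc_pw: "abc d (pw d)" using abc_pw2 by blast

lemma abc_Sm_le:
  assumes "k2 \<le> k1" "k1 \<le> m"
  shows "abc m (Sm m k1 k2)"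
proof -
  obtain dd where dd: "k1 = k2 + dd" using assms by (metis le_Suc_ex)
  obtain bb where bb: "m = k1 + bb" using assms by (metis le_Suc_ex)
  have "abc (k2 + 0 + bb + dd) (\<lambda>x y. (bA x y ^ k2 * bB x y ^ 0 * bC x y ^ bb) * pw dd x y)"
    by (intro abc_mult_mono abc_pw)
  hence "abc m (\<lambda>x y. (bA x y ^ k2 * bB x y ^ 0 * bC x y ^ bb) * pw dd x y)"
    by (rule abc_deg) (simp add: dd bb)
  thus ?thesis
    by (rule abc_cong) (simp add: Sm_def X_def pw_def bA_def bC_def dd bb power_add power_mult_distrib algebra_simps)
qed

lemma abc_Sm:
  assumes "k1 \<le> m" "k2 \<le> m"
  shows "abc m (Sm m k1 k2)"
proof (cases "k2 \<le> k1")
  case True thus ?thesis using assms by (intro abc_Sm_le)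
next
  case False thus ?thesis using assms abc_Sm_le[of k1 k2 m] by (simp add: Sm_sym)
qed


lemma mono_Sm:
  assumes M: "a + b + c = M"
  shows "2 * (bA x y ^ a * bB x y ^ b * bC x y ^ c) = (\<Sum>t\<le>b. of_nat (b choose t) * Sm M (a+t) (a+b-t) x y)"
proof -
  define U where "U t = X M (a+t) x * X M (a+b-t) y" for t
  define V where "V t = X M (a+b-t) x * X M (a+t) y" for t
  have "bB x y ^ b = (x 0 * y 1 + x 1 * y 0) ^ b" by (simp add: bB_def)
  also have "\<dots> = (\<Sum>t\<le>b. of_nat (b choose t) * (x 0 * y 1) ^ t * (x 1 * y 0) ^ (b - t))"
    by (rule binomial_ring)
  finally have Bb: "bB x y ^ b = (\<Sum>t\<le>b. of_nat (b choose t) * (x 0 * y 1) ^ t * (x 1 * y 0) ^ (b - t))" .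
  have m1: "bA x y ^ a * bB x y ^ b * bC x y ^ c = (\<Sum>t\<le>b. of_nat (b choose t) * U t)"
    unfolding Bb sum_distrib_left sum_distrib_right
  proof (rule sum.cong[OF refl])
    fix t assume "t \<in> {..b}"
    hence t: "t \<le> b" by simp
    have e1: "a + b - t = a + (b - t)" "M - (a + t) = c + (b - t)" "M - (a + (b - t)) = c + t" using t M by auto
    show "bA x y ^ a * (of_nat (b choose t) * (x 0 * y 1) ^ t * (x 1 * y 0) ^ (b - t)) * bC x y ^ c = of_nat (b choose t) * U t"
      unfolding U_def X_def e1 by (simp add: bA_def bC_def power_add power_mult_distrib mult_ac)
  qed
  have "(\<Sum>t\<le>b. of_nat (b choose t) * U t) = (\<Sum>t\<le>b. of_nat (b choose (b - t)) * U (b - t))"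
    by (rule sum_atMost_reflect[symmetric])
  also have "\<dots> = (\<Sum>t\<le>b. of_nat (b choose t) * V t)"
  proof (rule sum.cong[OF refl])
    fix t assume "t \<in> {..b}"
    hence t: "t \<le> b" by simp
    have "a + (b - t) = a + b - t" "a + b - (b - t) = a + t" using t by auto
    thus "of_nat (b choose (b - t)) * U (b - t) = of_nat (b choose t) * V t"
      using t by (simp add: U_def V_def binomial_symmetric[symmetric])
  qed
  finally have m2: "bA x y ^ a * bB x y ^ b * bC x y ^ c = (\<Sum>t\<le>b. of_nat (b choose t) * V t)" using m1 by simp
  have "2 * (bA x y ^ a * bB x y ^ b * bC x y ^ c) = (\<Sum>t\<le>b. of_nat (b choose t) * U t) + (\<Sum>t\<le>b. of_nat (b choose t) * V t)"
    using m1 m2 by simp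
  also have "\<dots> = (\<Sum>t\<le>b. of_nat (b choose t) * Sm M (a+t) (a+b-t) x y)"
    by (simp add: sum.distrib[symmetric] U_def V_def Sm_def algebra_simps)
  finally show ?thesis .
qed

lemma abc_inV2: "abc m f \<Longrightarrow> m = 2*e \<Longrightarrow> inV 1 e 2 f"
proof (induction rule: abc.induct)
  case (abc_mono a b c)
  have "inV 1 e 2 (\<lambda>x y. \<Sum>t\<le>b. (1/2 * of_nat (b choose t)) * Sm (2*e) (a+t) (a+b-t) x y)"
  proof (intro inV_sum inV_smult)
    fix t assume "t \<in> {..b}"
    thus "inV 1 e 2 (Sm (2*e) (a+t) (a+b-t))" using abc_mono by (intro core) auto
  qed simp
  moreover have "(\<Sum>t\<le>b. (1/2 * of_nat (b choose t)) * Sm (2*e) (a+t) (a+b-t) x y) = bA x y ^ a * bB x y ^ b * bC x y ^ c" for x y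
  proof -
    have "(\<Sum>t\<le>b. (1/2 * of_nat (b choose t)) * Sm (2*e) (a+t) (a+b-t) x y)
        = 1/2 * (\<Sum>t\<le>b. of_nat (b choose t) * Sm (2*e) (a+t) (a+b-t) x y)"
      by (simp add: sum_distrib_left mult.assoc)
    also have "\<dots> = 1/2 * (2 * (bA x y ^ a * bB x y ^ b * bC x y ^ c))"
      by (simp only: mono_Sm[OF abc_mono(1), of x y])
    finally show ?thesis by simp
  qed
  ultimately show ?case by (rule inV_cong)
next
  case (abc_add m f g) thus ?case by (intro inV_add) auto
next
  case (abc_smult m f s) thus ?case by (intro inV_smult) auto
qed

lemma abc_quad: "abc 1 (\<lambda>x y. bA x y + s * bB x y + s^2 * bC x y)"
  by (intro abc_add abc_smult abc_A abc_B abc_C)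

lemma abc_gk: "abc e (gk e k)"
proof (cases "k \<le> 2*e")
  case False
  show ?thesis by (rule abc_cong[OF abc_zero]) (use False gk_big in auto)
next
  case True
  define N where "N = Suc (2*e)"
  have kN: "k < N" using True by (simp add: N_def)
  have "abc e (\<lambda>x y. \<Sum>j<N. (1 / of_nat N * (omg N ^ j) ^ (N - k)) * (bA x y + (omg N ^ j) * bB x y + (omg N ^ j)^2 * bC x y) ^ e)"
  proof (intro abc_sum abc_smult)
    fix j
    show "abc e (\<lambda>x y. (bA x y + (omg N ^ j) * bB x y + (omg N ^ j)^2 * bC x y) ^ e)"
      using abc_pow[OF abc_quad, of e] by simp
  qed simp
  moreover have "(\<Sum>j<N. (1 / of_nat N * (omg N ^ j) ^ (N - k)) * (bA x y + (omg N ^ j) * bB x y + (omg N ^ j)^2 * bC x y) ^ e) = gk e k x y" for x y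
  proof -
    define u where "u = [:bA x y, bB x y, bC x y:] ^ e"
    have "degree u \<le> degree [:bA x y, bB x y, bC x y:] * e" unfolding u_def by (rule degree_power_le)
    also have "\<dots> \<le> 2 * e" by (intro mult_right_mono) auto
    finally have du: "degree u \<le> 2*e" .
    have pv: "(\<Sum>i<N. coeff u i * s ^ i) = (bA x y + s * bB x y + s^2 * bC x y) ^ e" for s
    proof -
      have "(\<Sum>i<N. coeff u i * s ^ i) = poly u s" unfolding N_def lessThan_Suc_atMost
        by (rule poly_sum_le[OF du, symmetric])
      thus ?thesis by (simp add: u_def poly_power algebra_simps power2_eq_square)
    qed
    have "gk e k x y = coeff u k" by (simp add: gk_def u_def)
    also have "\<dots> = (\<Sum>j<N. (1 / of_nat N * (omg N ^ j) ^ (N - k)) * (\<Sum>i<N. coeff u i * (omg N ^ j) ^ i))"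
      by (rule coeff_as_values[OF kN])
    also have "\<dots> = (\<Sum>j<N. (1 / of_nat N * (omg N ^ j) ^ (N - k)) * (bA x y + (omg N ^ j) * bB x y + (omg N ^ j)^2 * bC x y) ^ e)"
      by (simp only: pv)
    finally show ?thesis by simp
  qed
  ultimately show ?thesis by (rule abc_cong)
qed

lemma abc_polar_mk: "k \<le> 2*e \<Longrightarrow> abc e (polar e (mk e k))"
proof -
  assume k: "k \<le> 2*e"
  have nz: "(of_nat (2*e choose k) :: complex) \<noteq> 0" using k by simp
  have "abc e (\<lambda>x y. (fact e * of_nat (2*e choose e) / of_nat (2*e choose k)) * gk e k x y)"
    by (intro abc_smult abc_gk)
  moreover have "(fact e * of_nat (2*e choose e) / of_nat (2*e choose k)) * gk e k x y = polar e (mk e k) x y" for x y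
    using polar_mk[OF k, of x y] nz by (simp add: field_simps)
  ultimately show ?thesis by (rule abc_cong)
qed

lemma xmono1_mk: "a \<in> exps 1 (2*e) \<Longrightarrow> xmono 1 a = mk e (a 1)"
proof -
  assume a: "a \<in> exps 1 (2*e)"
  have "a 0 = 2*e - a 1" using exps1_sum[OF a] by simp
  thus ?thesis by (simp add: fun_eq_iff xmono_def atMost_Suc mk_def)
qed

lemma abc_polar: "is_form 1 (2*e) F \<Longrightarrow> abc e (polar e F)"
proof -
  assume "is_form 1 (2*e) F"
  then obtain c where c: "F = (\<lambda>x. \<Sum>a\<in>exps 1 (2*e). c a * xmono 1 a x)" by (auto simp: is_form_def)
  have hp: "has_pr (xmono 1 a)" if "a \<in> exps 1 (2*e)" for a
  proof -
    have "is_form 1 (2*e) (\<lambda>x. \<Sum>i\<in>{a}. 1 * xmono 1 i x)" using that by (intro is_form_gen) auto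
    moreover have "(\<lambda>x. \<Sum>i\<in>{a}. 1 * xmono 1 i x) = xmono 1 a" by (simp add: fun_eq_iff)
    ultimately have "is_form 1 (2*e) (xmono 1 a)" by simp
    thus ?thesis by (rule has_pr_form)
  qed
  have eq: "(\<Sum>a\<in>exps 1 (2*e). c a * polar e (xmono 1 a) x y) = polar e F x y" for x y
    unfolding c by (rule polar_sum(1)[OF finite_exps hp, symmetric])
  have "abc e (\<lambda>x y. \<Sum>a\<in>exps 1 (2*e). c a * polar e (xmono 1 a) x y)"
  proof (intro abc_sum abc_smult)
    fix a assume a: "a \<in> exps 1 (2*e)"
    have "a 1 \<le> 2*e" using exps1_sum[OF a] by simp
    thus "abc e (polar e (xmono 1 a))" using xmono1_mk[OF a] abc_polar_mk by simp
  qed (simp add: finite_exps)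
  thus ?thesis by (rule abc_cong) (rule eq)
qed


lemma split3:
  assumes "a + b + c = M1 + (M2::nat)"
  shows "\<exists>a1 b1 c1 a2 b2 c2. a = a1+a2 \<and> b = b1+b2 \<and> c = c1+c2 \<and> a1+b1+c1 = M1 \<and> a2+b2+c2 = M2"
proof (cases "M1 \<le> a")
  case True
  show ?thesis
    by (rule exI[of _ M1], rule exI[of _ 0], rule exI[of _ 0], rule exI[of _ "a - M1"], rule exI[of _ b], rule exI[of _ c])
      (use True assms in arith)
next
  case F1: False
  show ?thesis
  proof (cases "M1 \<le> a + b")
    case True
    show ?thesis
      by (rule exI[of _ a], rule exI[of _ "M1 - a"], rule exI[of _ 0], rule exI[of _ 0], rule exI[of _ "b - (M1 - a)"], rule exI[of _ c])
        (use True F1 assms in arith)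
  next
    case False
    show ?thesis
      by (rule exI[of _ a], rule exI[of _ b], rule exI[of _ "M1 - a - b"], rule exI[of _ 0], rule exI[of _ 0], rule exI[of _ "c - (M1 - a - b)"])
        (use False F1 assms in arith)
  qed
qed

lemma alpha_prod_2: "alpha_prod e 2 Fs x y = polar e (Fs 0) x y * polar e (Fs 1) x y"
  by (simp add: alpha_prod_def numeral_2_eq_2 lessThan_Suc)

lemma abc_inV_r: "2 \<le> r \<Longrightarrow> abc m f \<Longrightarrow> m = r*e \<Longrightarrow> inV 1 e r f"
proof (induction r arbitrary: m f rule: less_induct)
  case (less r)
  have r: "2 \<le> r" by (rule less.prems(1))
  from less.prems(2,3) show ?case
  proof (induction rule: abc.induct)
    case (abc_mono a b c)
    show ?case
    proof (cases "r = 2")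
      case True
      have "inV 1 e 2 (\<lambda>x y. bA x y ^ a * bB x y ^ b * bC x y ^ c)"
        by (rule abc_inV2[OF abc.abc_mono]) (use True abc_mono in simp)
      thus ?thesis using True by simp
    next
      case False
      hence r3: "3 \<le> r" using r by simp
      have "a + b + c = 2*e + (r-2)*e" using abc_mono r by (simp add: diff_mult_distrib)
      then obtain a1 b1 c1 a2 b2 c2 where sp: "a = a1+a2" "b = b1+b2" "c = c1+c2" "a1+b1+c1 = 2*e" "a2+b2+c2 = (r-2)*e"
        using split3 by blast
      define M1 where "M1 x y = bA x y ^ a1 * bB x y ^ b1 * bC x y ^ c1" for x y
      define M2 where "M2 x y = bA x y ^ a2 * bB x y ^ b2 * bC x y ^ c2" for x y
      have mm: "bA x y ^ a * bB x y ^ b * bC x y ^ c = M1 x y * M2 x y" for x y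
        by (simp add: M1_def M2_def sp power_add mult_ac)
      have I1: "inV 1 e 2 M1" unfolding M1_def using sp(4) by (intro abc_inV2[OF abc.abc_mono]) auto
      have A2: "abc ((r-2)*e) M2" unfolding M2_def using abc.abc_mono[of a2 b2 c2] sp(5) by simp
      show ?thesis
      proof (cases "r = 3")
        case False
        hence "2 \<le> r - 2" using r3 by simp
        hence I2: "inV 1 e (r-2) M2" using less.IH[of "r-2" "(r-2)*e" M2] A2 r by auto
        have "inV 1 e (2 + (r-2)) (\<lambda>x y. M1 x y * M2 x y)" by (rule inV_mult[OF I1 I2])
        moreover have "2 + (r - 2) = r" using r by simp
        ultimately have "inV 1 e r (\<lambda>x y. M1 x y * M2 x y)" by (simp only:)
        thus ?thesis by (simp add: mm)
      next
        case True
        obtain k :: nat and cf :: "nat \<Rightarrow> complex" and Fs :: "nat \<Rightarrow> nat \<Rightarrow> (nat \<Rightarrow> complex) \<Rightarrow> complex" where Fs: "\<forall>j<k. \<forall>i<2. is_form 1 (2 * e) (Fs j i)"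
          "M1 = (\<lambda>x y. \<Sum>j<k. cf j * alpha_prod e 2 (Fs j) x y)" using I1 by (rule inV_E)
        have A2': "abc e M2" using A2 True by simp
        have "inV 1 e 3 (\<lambda>x y. \<Sum>j<k. cf j * (polar e (Fs j 0) x y * (polar e (Fs j 1) x y * M2 x y)))"
        proof (intro inV_sum inV_smult)
          fix j assume "j \<in> {..<k}"
          hence f: "is_form 1 (2*e) (Fs j 0)" "is_form 1 (2*e) (Fs j 1)" using Fs(1) by auto
          have "abc (e + e) (\<lambda>x y. polar e (Fs j 1) x y * M2 x y)"
            by (rule abc_mult[OF abc_polar[OF f(2)] A2'])
          hence "inV 1 e 2 (\<lambda>x y. polar e (Fs j 1) x y * M2 x y)" by (rule abc_inV2) simp
          from inV_mult[OF inV_polar[OF f(1)] this]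
          show "inV 1 e 3 (\<lambda>x y. polar e (Fs j 0) x y * (polar e (Fs j 1) x y * M2 x y))" by (simp add: numeral_3_eq_3)
        qed simp
        moreover have "(\<Sum>j<k. cf j * (polar e (Fs j 0) x y * (polar e (Fs j 1) x y * M2 x y))) = bA x y ^ a * bB x y ^ b * bC x y ^ c" for x y
        proof -
          have "M1 x y = (\<Sum>j<k. cf j * (polar e (Fs j 0) x y * polar e (Fs j 1) x y))"
            by (simp add: Fs(2) alpha_prod_2)
          hence "M1 x y * M2 x y = (\<Sum>j<k. cf j * (polar e (Fs j 0) x y * (polar e (Fs j 1) x y * M2 x y)))"
            by (simp add: sum_distrib_left sum_distrib_right mult_ac)
          thus ?thesis by (simp add: mm)
        qed
        ultimately show ?thesis using True by (simp add: inV_cong)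
      qed
    qed
  next
    case (abc_add m f g) thus ?case by (intro inV_add) auto
  next
    case (abc_smult m f s) thus ?case by (intro inV_smult) auto
  qed
qed

theorem bin_thm:
  assumes "2 \<le> r" "k1 \<le> r*e" "k2 \<le> r*e"
  shows "inV 1 e r (Sm (r*e) k1 k2)"
  using abc_inV_r[OF assms(1) abc_Sm[OF assms(2,3)]] by simp

section \<open>Reduction from n+1 variables to two\<close>

inductive powspan :: "nat \<Rightarrow> nat \<Rightarrow> ((nat \<Rightarrow> complex) \<Rightarrow> complex) \<Rightarrow> bool" for n m where
  ps_pow: "powspan n m (\<lambda>x. lin n w x ^ m)"
| ps_add: "powspan n m f \<Longrightarrow> powspan n m g \<Longrightarrow> powspan n m (\<lambda>x. f x + g x)"
| ps_smult: "powspan n m f \<Longrightarrow> powspan n m (\<lambda>x. s * f x)"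

lemma ps_cong: "powspan n m f \<Longrightarrow> (\<And>x. f x = g x) \<Longrightarrow> powspan n m g"
proof -
  assume "powspan n m f" "\<And>x. f x = g x"
  moreover have "f = g" using \<open>\<And>x. f x = g x\<close> by (simp add: fun_eq_iff)
  ultimately show ?thesis by simp
qed

lemma ps_zero: "powspan n m (\<lambda>x. 0)"
  using ps_smult[OF ps_pow[of n m "\<lambda>_. 0"], of 0] by simp

lemma ps_sum:
  assumes "finite S" "\<And>s. s \<in> S \<Longrightarrow> powspan n m (f s)"
  shows "powspan n m (\<lambda>x. \<Sum>s\<in>S. f s x)"
  using assms
proof (induction S rule: finite_induct)
  case empty thus ?case by (simp add: ps_zero)
next
  case (insert s S) thus ?case by (simp add: ps_add)
qed

lemma ps_base_var:
  "powspan (Suc n) (p + k) (\<lambda>x. lin n w x ^ p * x (Suc n) ^ k)"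
proof -
  define N where "N = Suc (p + k)"
  have pN: "p < N" by (simp add: N_def)
  define W where "W j = (\<lambda>l. if l \<le> n then omg N ^ j * w l else 1)" for j
  have linW: "lin (Suc n) (W j) x = omg N ^ j * lin n w x + x (Suc n)" for j x
    by (simp add: lin_def W_def sum_distrib_left mult.assoc)
  define cst :: complex where "cst = of_nat ((p + k) choose p)"
  have cst: "cst \<noteq> 0" by (simp add: cst_def)
  have "powspan (Suc n) (p + k) (\<lambda>x. \<Sum>j<N. (1 / cst * (1 / of_nat N * (omg N ^ j) ^ (N - p))) * lin (Suc n) (W j) x ^ (p + k))"
    by (intro ps_sum ps_smult ps_pow) auto
  moreover have "(\<Sum>j<N. (1 / cst * (1 / of_nat N * (omg N ^ j) ^ (N - p))) * lin (Suc n) (W j) x ^ (p + k))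
      = lin n w x ^ p * x (Suc n) ^ k" for x
  proof -
    define L where "L = lin n w x"
    define z where "z = x (Suc n)"
    define c where "c i = of_nat ((p + k) choose i) * L ^ i * z ^ (p + k - i)" for i
    have P: "(\<Sum>i<N. c i * s ^ i) = (s * L + z) ^ (p + k)" for s
    proof -
      have "(s * L + z) ^ (p + k) = (\<Sum>i\<le>p + k. of_nat ((p + k) choose i) * (s * L) ^ i * z ^ (p + k - i))"
        by (rule binomial_ring)
      also have "\<dots> = (\<Sum>i<N. c i * s ^ i)"
        unfolding N_def lessThan_Suc_atMost c_def by (simp add: power_mult_distrib mult_ac)
      finally show ?thesis by simp
    qed
    have "c p = (\<Sum>j<N. (1 / of_nat N * (omg N ^ j) ^ (N - p)) * (\<Sum>i<N. c i * (omg N ^ j) ^ i))"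
      by (rule coeff_as_values[OF pN])
    also have "\<dots> = (\<Sum>j<N. (1 / of_nat N * (omg N ^ j) ^ (N - p)) * lin (Suc n) (W j) x ^ (p + k))"
      by (simp only: P linW L_def z_def)
    finally have cp: "c p = (\<Sum>j<N. (1 / of_nat N * (omg N ^ j) ^ (N - p)) * lin (Suc n) (W j) x ^ (p + k))" .
    have "(\<Sum>j<N. (1 / cst * (1 / of_nat N * (omg N ^ j) ^ (N - p))) * lin (Suc n) (W j) x ^ (p + k))
        = 1 / cst * c p" unfolding cp by (simp add: sum_distrib_left mult.assoc)
    also have "\<dots> = L ^ p * z ^ k" using cst by (simp add: c_def cst_def)
    finally show ?thesis by (simp add: L_def z_def)
  qed
  ultimately show ?thesis by (rule ps_cong)
qed

lemma ps_mult_var: "powspan n p f \<Longrightarrow> powspan (Suc n) (p + k) (\<lambda>x. f x * x (Suc n) ^ k)"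
proof (induction rule: powspan.induct)
  case (ps_pow w) thus ?case by (rule ps_base_var)
next
  case (ps_add f g)
  hence "powspan (Suc n) (p + k) (\<lambda>x. f x * x (Suc n) ^ k + g x * x (Suc n) ^ k)" by (intro powspan.ps_add)
  thus ?case by (rule ps_cong) (simp add: algebra_simps)
next
  case (ps_smult f s)
  hence "powspan (Suc n) (p + k) (\<lambda>x. s * (f x * x (Suc n) ^ k))" by (intro powspan.ps_smult)
  thus ?case by (rule ps_cong) (simp add: algebra_simps)
qed

lemma xmono_ps: "a \<in> exps n m \<Longrightarrow> powspan n m (xmono n a)"
proof (induction n arbitrary: a m)
  case 0
  hence a0: "a 0 = m" by (simp add: exps_def)
  have "powspan 0 m (\<lambda>x. lin 0 (\<lambda>_. 1) x ^ m)" by (rule ps_pow)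
  thus ?case by (rule ps_cong) (simp add: lin_def xmono_def a0)
next
  case (Suc n)
  define k where "k = a (Suc n)"
  define a' where "a' = a(Suc n := 0)"
  have sa: "(\<Sum>l\<le>Suc n. a l) = m" and za: "\<forall>l>Suc n. a l = 0" using Suc.prems by (auto simp: exps_def)
  have s': "(\<Sum>l\<le>n. a' l) = (\<Sum>l\<le>n. a l)" by (intro sum.cong) (auto simp: a'_def)
  have km: "k \<le> m" using sa by (simp add: k_def)
  have "a' \<in> exps n (m - k)"
    using sa za s' by (auto simp: exps_def a'_def k_def)
  hence "powspan n (m - k) (xmono n a')" by (rule Suc.IH)
  hence "powspan (Suc n) (m - k + k) (\<lambda>x. xmono n a' x * x (Suc n) ^ k)" by (rule ps_mult_var)
  moreover have "xmono n a' x * x (Suc n) ^ k = xmono (Suc n) a x" for x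
  proof -
    have "xmono n a' x = (\<Prod>l\<le>n. x l ^ a l)" unfolding xmono_def by (intro prod.cong) (auto simp: a'_def)
    thus ?thesis by (simp add: xmono_def k_def)
  qed
  ultimately show ?case using km by (simp add: ps_cong)
qed

lemma Sm_m0: "Sm m m 0 u u' = u 0 ^ m * u' 1 ^ m + u 1 ^ m * u' 0 ^ m"
  by (simp add: Sm_def X_def mult_ac)

lemma pair_inV:
  assumes r: "2 \<le> r" and m: "m = r*e"
  shows "powspan n m f \<Longrightarrow> powspan n m g \<Longrightarrow> inV n e r (\<lambda>x y. f x * g y + f y * g x)"
proof (induction arbitrary: g rule: powspan.induct)
  case (ps_pow v)
  from ps_pow show ?case
  proof (induction rule: powspan.induct)
    case (ps_pow w)
    have "inV 1 e r (Sm (r*e) (r*e) 0)" by (rule bin_thm) (use r in auto)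
    hence "inV n e r (\<lambda>x y. Sm m m 0 (sub2 n v w x) (sub2 n v w y))" unfolding m by (rule inV_sub2)
    thus ?case by (rule inV_cong) (simp add: Sm_m0 sub2_def mult_ac)
  next
    case (ps_add g1 g2)
    have "inV n e r (\<lambda>x y. (lin n v x ^ m * g1 y + lin n v y ^ m * g1 x) + (lin n v x ^ m * g2 y + lin n v y ^ m * g2 x))"
      by (rule inV_add[OF ps_add.IH(1) ps_add.IH(2)])
    thus ?case by (rule inV_cong) (simp add: algebra_simps)
  next
    case (ps_smult g s)
    hence "inV n e r (\<lambda>x y. s * (lin n v x ^ m * g y + lin n v y ^ m * g x))" by (intro inV_smult)
    thus ?case by (rule inV_cong) (simp add: algebra_simps)
  qed
next
  case (ps_add f1 f2)
  have "inV n e r (\<lambda>x y. (f1 x * g y + f1 y * g x) + (f2 x * g y + f2 y * g x))"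
    by (rule inV_add[OF ps_add.IH(1)[OF ps_add.prems] ps_add.IH(2)[OF ps_add.prems]])
  thus ?case by (rule inV_cong) (simp add: algebra_simps)
next
  case (ps_smult f s)
  hence "inV n e r (\<lambda>x y. s * (f x * g y + f y * g x))" by (intro inV_smult) auto
  thus ?case by (rule inV_cong) (simp add: algebra_simps)
qed

theorem main_inV:
  assumes r: "2 \<le> r" and G: "is_sym_biform n (r*e) G"
  shows "inV n e r G"
proof -
  obtain c where c: "G = (\<lambda>x y. \<Sum>a\<in>exps n (r*e). \<Sum>b\<in>exps n (r*e). c a b * xmono n a x * xmono n b y)"
    and sym: "\<And>x y. G x y = G y x" using G unfolding is_sym_biform_def by blast
  have "inV n e r (\<lambda>x y. \<Sum>a\<in>exps n (r*e). \<Sum>b\<in>exps n (r*e). (c a b / 2) * (xmono n a x * xmono n b y + xmono n a y * xmono n b x))"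
  proof (intro inV_sum inV_smult)
    fix a b assume "a \<in> exps n (r*e)" "b \<in> exps n (r*e)"
    thus "inV n e r (\<lambda>x y. xmono n a x * xmono n b y + xmono n a y * xmono n b x)"
      by (intro pair_inV[OF r refl] xmono_ps)
  qed (auto simp: finite_exps)
  moreover have "(\<Sum>a\<in>exps n (r*e). \<Sum>b\<in>exps n (r*e). (c a b / 2) * (xmono n a x * xmono n b y + xmono n a y * xmono n b x)) = G x y" for x y
  proof -
    have "G x y = (G x y + G y x) / 2" using sym[of x y] by simp
    also have "\<dots> = (\<Sum>a\<in>exps n (r*e). \<Sum>b\<in>exps n (r*e). (c a b / 2) * (xmono n a x * xmono n b y + xmono n a y * xmono n b x))"
      unfolding c by (simp add: sum.distrib[symmetric] sum_divide_distrib add_divide_distrib algebra_simps)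
    finally show ?thesis by simp
  qed
  ultimately show ?thesis by (rule inV_cong)
qed

theorem mainTheorem1:
  fixes n e r :: nat
  assumes "n \<ge> 1" and "e \<ge> 1" and "r \<ge> 2"
  shows "\<forall>G. is_sym_biform n (r * e) G \<longrightarrow>
           (\<exists>(k::nat) (c::nat \<Rightarrow> complex) (Fs::nat \<Rightarrow> nat \<Rightarrow> (nat \<Rightarrow> complex) \<Rightarrow> complex).
              (\<forall>j<k. \<forall>i<r. is_form n (2 * e) (Fs j i)) \<and>
              G = (\<lambda>x y. \<Sum>j<k. c j * alpha_prod e r (Fs j) x y))"
proof (intro allI impI)
  fix G assume "is_sym_biform n (r * e) G"
  hence "inV n e r G" using main_inV assms(3) by blast
  thus "\<exists>(k::nat) (c::nat \<Rightarrow> complex) (Fs::nat \<Rightarrow> nat \<Rightarrow> (nat \<Rightarrow> complex) \<Rightarrow> complex).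
              (\<forall>j<k. \<forall>i<r. is_form n (2 * e) (Fs j i)) \<and>
              G = (\<lambda>x y. \<Sum>j<k. c j * alpha_prod e r (Fs j) x y)"
    unfolding inV_def .
qed

end
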